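(* Let $\kappa=\exp\left(\sum_p\frac{1}{p\log p}\right)$ (sum over all primes). Then $\kappa\leqslant5.5$, and for every real $Y\geqslant20$ and integer $\alpha\geqslant2$, $$\sum_{\substack{d\geqslant Y\\ p\mid d\Rightarrow p^\alpha\mid d}}\frac1d\leqslant\frac{3\kappa^\alpha\log Y}{Y^{1-1/\alpha}},\qquad \sum_{\substack{d\geqslant Y\\ p\mid d\Rightarrow p^\alpha\mid d}}\frac{1}{\varphi(d)}\leqslant\frac{13\kappa^\alpha\log Y\log\log Y}{Y^{1-1/\alpha}},$$ where the sums run over natural numbers $d\geqslant Y$ such that every prime dividing $d$ divides it to exponent at least $\alpha$.
   Context: $\varphi$ is Euler's totient function; $p$ denotes primes. *)

theory Defs
  imports "HOL-Analysis.Analysis" "HOL-Number_Theory.Number_Theory"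
begin

definition kappa :: real where
  "kappa = exp (\<Sum>\<^sub>\<infinity>p\<in>{p::nat. prime p}. 1 / (real p * ln (real p)))"

definition alpha_full :: "nat \<Rightarrow> nat \<Rightarrow> bool" where
  "alpha_full \<alpha> d \<longleftrightarrow> (\<forall>p. prime p \<and> p dvd d \<longrightarrow> p ^ \<alpha> dvd d)"

end

theory Submission
  imports Defs
begin

definition PS :: "nat \<Rightarrow> nat set" where "PS n = {p. prime p \<and> p \<le> n}"

lemma PS_finite[simp]: "finite (PS n)" unfolding PS_def by auto

lemma prod_prime_powers_dvd:
  fixes x :: nat
  assumes "finite P" "\<forall>p\<in>P. prime p" "\<forall>p\<in>P. p ^ e p dvd x"
  shows "(\<Prod>p\<in>P. p ^ e p) dvd x"
  using assms
proof (induction P rule: finite_induct)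
  case empty then show ?case by simp
next
  case (insert q P)
  have "coprime (q ^ e q) (\<Prod>p\<in>P. p ^ e p)"
  proof (rule prod_coprime_right)
    fix p assume "p \<in> P"
    then have "prime p" "prime q" "p \<noteq> q" using insert by auto
    then have "coprime q p" using primes_coprime by blast
    then show "coprime (q ^ e q) (p ^ e p)" by simp
  qed
  then show ?case using insert by (simp add: divides_mult)
qed

lemma binom_le: "(2*m+1 choose m) \<le> 4 ^ m"
proof -
  have "(2*m+1 choose m) + (2*m+1 choose (m+1)) \<le> (\<Sum>k\<le>2*m+1. (2*m+1) choose k)"
  proof -
    have "(\<Sum>k\<in>{m, m+1}. (2*m+1) choose k) \<le> (\<Sum>k\<le>2*m+1. (2*m+1) choose k)"
      by (rule sum_mono2) auto
    then show ?thesis by simp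
  qed
  also have "\<dots> = 2 ^ (2*m+1)" by (rule choose_row_sum)
  also have "(2*m+1 choose (m+1)) = (2*m+1 choose m)"
    using binomial_symmetric[of m "2*m+1"] by simp
  finally have "2 * (2*m+1 choose m) \<le> 2 * 4^m"
    by (simp add: power_mult power_add)
  then show ?thesis by simp
qed

lemma primes_dvd_binom:
  assumes "prime p" "m + 1 < p" "p \<le> 2*m+1"
  shows "p dvd (2*m+1 choose m)"
proof -
  have "fact m * fact (m+1) * (2*m+1 choose m) = (fact (2*m+1) :: nat)"
    using binomial_fact_lemma[of m "2*m+1"] by (simp add: mult_2)
  moreover have "p dvd fact (2*m+1)" using assms prime_dvd_fact_iff by blast
  ultimately have h: "p dvd (fact m * fact (m+1)) * (2*m+1 choose m)" by metis
  have "\<not> p dvd fact m" by (subst prime_dvd_fact_iff[OF assms(1)]) (use assms in simp)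
  moreover have "\<not> p dvd fact (m+1)" by (subst prime_dvd_fact_iff[OF assms(1)]) (use assms in simp)
  ultimately
  have "\<not> p dvd fact m * fact (m+1)" using assms(1) prime_dvd_mult_iff by blast
  then show ?thesis using h assms(1) prime_dvd_mult_iff by blast
qed

lemma primorial_le: "(\<Prod>p\<in>PS n. p) \<le> 4 ^ n"
proof (induction n rule: less_induct)
  case (less n)
  show ?case
  proof (cases "n \<le> 2")
    case True
    then have "n = 0 \<or> n = 1 \<or> n = 2" by auto
    moreover have "PS 0 = {}" "PS 1 = {}" unfolding PS_def using prime_ge_2_nat
      by (auto simp: le_Suc_eq prime_gt_0_nat)
    moreover have "PS 2 = {2}" unfolding PS_def
      by (auto dest: prime_ge_2_nat)
    ultimately show ?thesis by auto
  next
    case False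
    show ?thesis
    proof (cases "even n")
      case True
      then have "\<not> prime n" using False
        using prime_odd_nat by fastforce
      then have "PS n = PS (n - 1)" unfolding PS_def using False by (auto simp: le_Suc_eq)
        (metis One_nat_def Suc_pred' le_SucE not_gr_zero le_zero_eq)
      then have "(\<Prod>p\<in>PS n. p) \<le> 4 ^ (n-1)" using less[of "n-1"] False by simp
      also have "\<dots> \<le> 4 ^ n" by (rule power_increasing) auto
      finally show ?thesis .
    next
      case odd: False
      then obtain m where n: "n = 2*m+1" by (metis oddE)
      with False have m1: "m \<ge> 1" by simp
      define Q where "Q = {p. prime p \<and> m+1 < p \<and> p \<le> 2*m+1}"
      have split: "PS n = PS (m+1) \<union> Q" "PS (m+1) \<inter> Q = {}"
        unfolding PS_def Q_def n by auto
      have fQ: "finite Q" unfolding Q_def by auto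
      have "(\<Prod>p\<in>Q. p) = (\<Prod>p\<in>Q. p ^ 1)" by simp
      also have "\<dots> dvd (2*m+1 choose m)"
        by (rule prod_prime_powers_dvd[OF fQ]) (use primes_dvd_binom in \<open>auto simp: Q_def\<close>)
      finally have "(\<Prod>p\<in>Q. p) \<le> (2*m+1 choose m)"
        by (rule dvd_imp_le) (simp add: zero_less_binomial_iff)
      also have "\<dots> \<le> 4 ^ m" by (rule binom_le)
      finally have Q: "(\<Prod>p\<in>Q. p) \<le> 4 ^ m" .
      have "(\<Prod>p\<in>PS n. p) = (\<Prod>p\<in>PS (m+1). p) * (\<Prod>p\<in>Q. p)"
        using split fQ by (simp add: prod.union_disjoint)
      also have "\<dots> \<le> 4 ^ (m+1) * 4 ^ m"
        using less[of "m+1"] n m1 Q by (intro mult_mono) auto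
      also have "\<dots> = 4 ^ n" using n by (simp add: power_add[symmetric])
      finally show ?thesis .
    qed
  qed
qed

definition theta :: "nat \<Rightarrow> real" where "theta n = (\<Sum>p\<in>PS n. ln (real p))"

lemma theta_le: "theta n \<le> real n * ln 4"
proof -
  have pos: "\<And>p. p \<in> PS n \<Longrightarrow> real p > 0" unfolding PS_def using prime_gt_0_nat by auto
  have "theta n = ln (\<Prod>p\<in>PS n. real p)"
    unfolding theta_def using pos by (subst ln_prod) auto
  also have "(\<Prod>p\<in>PS n. real p) = real (\<Prod>p\<in>PS n. p)" by simp
  also have "ln \<dots> \<le> ln (4 ^ n)"
    using primorial_le[of n] pos by (subst ln_le_cancel_iff) (auto intro!: prod_pos simp del: of_nat_prod
      simp: of_nat_prod[symmetric])
  also have "\<dots> = real n * ln 4" by (simp add: ln_realpow)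
  finally show ?thesis .
qed

lemma fact_pow_dvd: "prime p \<Longrightarrow> p ^ (n div p) dvd fact n"
proof (induction n)
  case 0 then show ?case by simp
next
  case (Suc n)
  show ?case
  proof (cases "Suc n mod p = 0")
    case True
    then have "Suc n div p = Suc (n div p)" by (simp add: div_Suc)
    moreover have "p dvd Suc n" using True by (simp add: mod_eq_0_iff_dvd)
    have "p ^ (n div p) * p dvd fact n * Suc n"
      using Suc.IH[OF Suc.prems] \<open>p dvd Suc n\<close> by (rule mult_dvd_mono)
    moreover have e1: "p ^ (Suc n div p) = p ^ (n div p) * p"
      using \<open>Suc n div p = Suc (n div p)\<close> by simp
    moreover have e2: "fact (Suc n) = fact n * (Suc n :: nat)" by (simp add: fact_Suc)
    ultimately show ?thesis by (simp only: e1 e2)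
  next
    case False
    then have "Suc n div p = n div p" by (simp add: div_Suc)
    moreover have "fact n dvd (fact (Suc n) :: nat)" by (simp add: fact_dvd)
    ultimately show ?thesis using Suc dvd_trans by metis
  qed
qed

lemma sum_div_le_lnfact: "(\<Sum>p\<in>PS n. real (n div p) * ln (real p)) \<le> ln (fact n)"
proof -
  have pos: "\<And>p. p \<in> PS n \<Longrightarrow> p > 0" unfolding PS_def using prime_gt_0_nat by auto
  have "(\<Prod>p\<in>PS n. p ^ (n div p)) dvd fact n"
    by (rule prod_prime_powers_dvd) (auto simp: PS_def fact_pow_dvd)
  then have le: "(\<Prod>p\<in>PS n. p ^ (n div p)) \<le> (fact n :: nat)"
    by (rule dvd_imp_le) simp
  have "(\<Sum>p\<in>PS n. real (n div p) * ln (real p)) = (\<Sum>p\<in>PS n. ln (real p ^ (n div p)))"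
    using pos by (intro sum.cong) (auto simp: ln_realpow)
  also have "\<dots> = ln (\<Prod>p\<in>PS n. real p ^ (n div p))"
    using pos by (subst ln_prod) auto
  also have "(\<Prod>p\<in>PS n. real p ^ (n div p)) = real (\<Prod>p\<in>PS n. p ^ (n div p))" by simp
  also have "ln \<dots> \<le> ln (real (fact n))"
  proof (subst ln_le_cancel_iff)
    show "0 < real (\<Prod>p\<in>PS n. p ^ (n div p))" using pos
      by (simp only: of_nat_0_less_iff) (auto intro!: prod_pos)
    show "0 < real (fact n)" by simp
    show "real (\<Prod>p\<in>PS n. p ^ (n div p)) \<le> real (fact n)" using le by (simp only: of_nat_le_iff)
  qed
  also have "real (fact n) = fact n" by (rule of_nat_fact)
  finally show ?thesis .
qed

lemma lnfact_le: "n \<ge> 1 \<Longrightarrow> ln (fact n) \<le> real n * ln n - n + 1 + ln n"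
proof (induction n rule: dec_induct)
  case base then show ?case by simp
next
  case (step n)
  have n: "real n \<ge> 1" using step by simp
  have "ln (real n / (real n + 1)) \<le> real n / (real n + 1) - 1"
    using n by (intro ln_le_minus_one) auto
  also have "\<dots> = - 1 / (real n + 1)" using n by (simp add: field_simps)
  finally have "ln (real n) - ln (real n + 1) \<le> -1 / (real n + 1)"
    using n by (simp add: ln_div)
  then have key: "1 + ln n * (real n + 1) \<le> (real n + 1) * ln (real n + 1)"
    using n by (simp add: field_simps)
  have "ln (fact (Suc n)) = ln (fact n) + ln (real n + 1)"
    by (simp add: fact_Suc ln_mult add.commute)
  also have "\<dots> \<le> real n * ln n - n + 1 + ln n + ln (real n + 1)" using step by simp
  also have "\<dots> \<le> real (Suc n) * ln (Suc n) - real (Suc n) + 1 + ln (Suc n)"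
    using key by (simp add: algebra_simps)
  finally show ?case .
qed

definition mert :: "nat \<Rightarrow> real" where "mert n = (\<Sum>p\<in>PS n. ln (real p) / real p)"

lemma mert_le:
  assumes "n \<ge> 1"
  shows "mert n \<le> ln n - 1 + ln 4 + (1 + ln n) / n"
proof -
  have n: "real n \<ge> 1" using assms by simp
  have pos: "\<And>p. p \<in> PS n \<Longrightarrow> p > 0" unfolding PS_def using prime_gt_0_nat by auto
  have "real n * mert n = (\<Sum>p\<in>PS n. (real n / real p) * ln (real p))"
    unfolding mert_def by (simp add: sum_distrib_left)
  also have "\<dots> \<le> (\<Sum>p\<in>PS n. (real (n div p) + 1) * ln (real p))"
  proof (intro sum_mono mult_right_mono)
    fix p assume p: "p \<in> PS n"
    have "n = p * (n div p) + n mod p" by simp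
    moreover have "n mod p < p" using pos[OF p] by simp
    ultimately have "real n < real p * (real (n div p) + 1)"
      by (metis add_less_cancel_left distrib_left mult.right_neutral of_nat_add of_nat_less_iff of_nat_mult of_nat_1)
    then show "real n / real p \<le> real (n div p) + 1" using pos[OF p]
      by (simp add: field_simps)
    show "0 \<le> ln (real p)" using pos[OF p] by simp
  qed
  also have "\<dots> = (\<Sum>p\<in>PS n. real (n div p) * ln (real p)) + theta n"
    unfolding theta_def by (simp add: algebra_simps sum.distrib)
  also have "\<dots> \<le> (real n * ln n - n + 1 + ln n) + real n * ln 4"
    using sum_div_le_lnfact[of n] lnfact_le[OF assms] theta_le[of n] by simp
  finally have calc: "real n * mert n \<le> (real n * ln n - n + 1 + ln n) + real n * ln 4" .
  have "mert n \<le> ((real n * ln n - n + 1 + ln n) + real n * ln 4) / real n"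
    using calc n by (simp add: pos_le_divide_eq mult.commute)
  also have "\<dots> = ln n - 1 + ln 4 + (1 + ln n) / n" using n by (simp add: field_simps)
  finally show ?thesis .
qed

lemma tail_step_real:
  fixes a b m c :: real
  assumes "0 < a" "a < b" "m \<le> a + c"
  shows "(m - a - c) / a^2 - 1 / a \<le> (m - b - c) / b^2 - 1 / b"
proof -
  define u where "u = a + c - m"
  have u: "u \<ge> 0" using assms unfolding u_def by simp
  have "u / b^2 \<le> u / a^2"
    using assms u by (intro divide_left_mono) (auto intro!: power_mono)
  moreover have "(b - a) / b^2 + 1 / b \<le> 1 / a"
  proof -
    have e: "b^2 - a * (2*b - a) = (b - a)^2" by (simp add: power2_eq_square algebra_simps)
    have "0 \<le> (b - a)^2" by simp
    then have "a * (2*b - a) \<le> b^2" using e by linarith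
    then show ?thesis using assms by (simp add: field_simps power2_eq_square)
  qed
  ultimately have "(u + (b - a)) / b^2 + 1 / b \<le> u / a^2 + 1 / a"
    by (simp add: add_divide_distrib)
  then show ?thesis unfolding u_def by (simp add: diff_divide_distrib add_divide_distrib algebra_simps)
qed

lemma PS_Suc: "PS (Suc M) = PS M \<union> (if prime (Suc M) then {Suc M} else {})"
  unfolding PS_def by (auto simp: le_Suc_eq)

lemma tail_bound:
  fixes N :: nat and c :: real
  assumes N: "N \<ge> 2" and H: "\<And>n. n \<ge> N \<Longrightarrow> mert n \<le> ln n + c"
  shows "\<And>M. M \<ge> N \<Longrightarrow> (\<Sum>p\<in>PS M - PS N. 1 / (real p * ln (real p)))
           \<le> 1 / ln N + (ln N + c - mert N) / (ln N)^2"
proof -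
  define R0 where "R0 = 1 / ln N + (ln N + c - mert N) / (ln N)^2"
  define A where "A M = (\<Sum>p\<in>PS M - PS N. 1 / (real p * ln (real p)))" for M
  have claim: "A M \<le> (mert M - ln M - c) / (ln M)^2 + R0 - 1 / ln M" if "M \<ge> N" for M
    using that
  proof (induction M rule: dec_induct)
    case base
    have "ln (real N) > 0" using N by simp
    then show ?case unfolding A_def R0_def by (simp add: field_simps)
  next
    case (step M)
    have M2: "M \<ge> 2" using step N by simp
    define a where "a = ln (real M)"
    define b where "b = ln (real (Suc M))"
    have a: "0 < a" unfolding a_def using M2 by simp
    have ab: "a < b" unfolding a_def b_def using M2 by simp
    define \<delta> where "\<delta> = (if prime (Suc M) then ln (real (Suc M)) / real (Suc M) else 0)"
    have mertS: "mert (Suc M) = mert M + \<delta>"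
      unfolding mert_def \<delta>_def PS_Suc by (auto simp: PS_def)
    have AS: "A (Suc M) = A M + \<delta> / b^2"
    proof (cases "prime (Suc M)")
      case True
      have "PS (Suc M) - PS N = insert (Suc M) (PS M - PS N)"
        using True step unfolding PS_Suc by (auto simp: PS_def)
      moreover have "Suc M \<notin> PS M - PS N" by (auto simp: PS_def)
      ultimately have "A (Suc M) = 1 / (real (Suc M) * b) + A M"
        unfolding A_def b_def by simp
      moreover have de: "\<delta> = b / real (Suc M)" unfolding \<delta>_def b_def using True by simp
      have "b \<noteq> 0" using ab a by simp
      have aux: "x \<noteq> 0 \<Longrightarrow> n > 0 \<Longrightarrow> (x / n) / x^2 = 1 / (n * x)" for x n :: real
        by (simp add: field_simps power2_eq_square)
      have "\<delta> / b^2 = 1 / (real (Suc M) * b)"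
        unfolding de by (rule aux) (use \<open>b \<noteq> 0\<close> in auto)
      ultimately show ?thesis by simp
    next
      case False
      then show ?thesis unfolding A_def \<delta>_def PS_Suc by simp
    qed
    have "A (Suc M) \<le> (mert M - a - c) / a^2 + R0 - 1 / a + \<delta> / b^2"
      using AS step.IH unfolding a_def by simp
    also have "\<dots> \<le> (mert M - b - c) / b^2 - 1 / b + R0 + \<delta> / b^2"
      using tail_step_real[OF a ab, of "mert M" c] H[of M] step unfolding a_def by simp
    also have "\<dots> = (mert (Suc M) - b - c) / b^2 + R0 - 1 / b"
      using mertS by (simp add: diff_divide_distrib add_divide_distrib)
    finally show ?case unfolding b_def by simp
  qed
  fix M assume M: "M \<ge> N"
  have "ln (real M) > 0" using M N by simp
  moreover have "mert M - ln M - c \<le> 0" using H[OF M] by simp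
  ultimately have "(mert M - ln M - c) / (ln M)^2 \<le> 0" "0 \<le> 1 / ln M"
    by (simp_all add: divide_nonpos_pos)
  then have "(mert M - ln M - c) / (ln M)^2 - 1 / ln M \<le> 0" by linarith
  then show "A M \<le> R0" using claim[OF M] by simp
qed

lemma ln_series_deriv_nonneg:
  fixes x :: real assumes x: "x < 1" "0 \<le> x"
  shows "0 \<le> 1/(1+x) + 1/(1-x) - (2 + 2*x^2 + 2*x^4)"
proof -
  have h: "1 + x \<noteq> 0" "1 - x \<noteq> 0" using x by auto
  have d: "(1+x)*(1-x) > 0" using x by simp
  have e1: "1/(1+x) + 1/(1-x) = 2/((1+x)*(1-x))" using h by (simp add: field_simps)
  have e2: "(2 + 2*x^2 + 2*x^4) * ((1+x)*(1-x)) = 2 - 2*x^6" by (simp add: algebra_simps eval_nat_numeral)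
  have "(2 + 2*x^2 + 2*x^4) * ((1+x)*(1-x)) \<le> 2" unfolding e2 by simp
  then have "(2 + 2*x^2 + 2*x^4) \<le> 2/((1+x)*(1-x))" using d by (simp add: pos_le_divide_eq)
  then show ?thesis unfolding e1 by simp
qed

lemma ln_series_lower:
  fixes z :: real assumes "0 \<le> z" "z < 1"
  shows "2*z + 2/3*z^3 + 2/5*z^5 \<le> ln (1+z) - ln (1-z)"
proof -
  define g where "g x = ln (1+x) - ln (1-x) - (2*x + 2/3*x^3 + 2/5*x^5)" for x :: real
  have "g 0 \<le> g z"
  proof (rule DERIV_nonneg_imp_nondecreasing[OF assms(1)])
    fix x assume x: "0 \<le> x" "x \<le> z"
    then have x1: "x < 1" using assms by simp
    have "(g has_real_derivative (1/(1+x) + 1/(1-x) - (2 + 2*x^2 + 2*x^4))) (at x)"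
      unfolding g_def using x x1
      apply -
      apply (rule derivative_eq_intros refl | simp)+
      done
    then show "\<exists>y. (g has_real_derivative y) (at x) \<and> 0 \<le> y"
      using ln_series_deriv_nonneg[OF x1 x(1)] by blast
  qed
  then show ?thesis unfolding g_def by simp
qed

lemma ln_ratio_z:
  fixes a b :: real assumes "0 < a" "a \<le> b"
  shows "0 \<le> (b - a) / (b + a)" "(b - a) / (b + a) < 1"
    "ln b - ln a = ln (1 + (b - a) / (b + a)) - ln (1 - (b - a) / (b + a))"
proof -
  show "0 \<le> (b - a) / (b + a)" using assms by simp
  show "(b - a) / (b + a) < 1" using assms by (simp add: field_simps)
  have "1 + (b - a) / (b + a) = 2*b/(b+a)" "1 - (b - a) / (b + a) = 2*a/(b+a)"
    using assms by (simp_all add: field_simps)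
  then show "ln b - ln a = ln (1 + (b - a) / (b + a)) - ln (1 - (b - a) / (b + a))"
    using assms by (simp add: ln_div ln_mult)
qed

lemma ln_chain_lo:
  fixes a b l l' :: real
  assumes "0 < a" "a \<le> b" "l \<le> ln a"
    "l' \<le> l + 2*((b-a)/(b+a)) + 2/3*((b-a)/(b+a))^3 + 2/5*((b-a)/(b+a))^5"
  shows "l' \<le> ln b"
  using ln_ratio_z[OF assms(1,2)] ln_series_lower[of "(b-a)/(b+a)"] assms by linarith

lemma ln_chain_up:
  fixes a b l l' :: real
  assumes "0 < a" "a < b" "ln a \<le> l" "l + (b - a) * (inverse a + inverse b) / 2 \<le> l'"
  shows "ln b \<le> l'"
  using ln_inverse_approx_le[of a "b - a"] assms by simp

definition ptest2 :: "nat \<Rightarrow> bool" where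
  "ptest2 n = (2 \<le> n \<and> list_all (\<lambda>d. n mod d \<noteq> 0 \<or> d = n) [2,3,5,7,11,13,17])"

lemma small_primes: "\<forall>q\<in>{0..<19::nat}. prime q \<longrightarrow> q \<in> set [2,3,5,7,11,13,17]"
  by code_simp

lemma ptest2_iff: assumes "n < 361" shows "prime n \<longleftrightarrow> ptest2 n"
proof
  assume p: "prime n"
  have "n mod d \<noteq> 0 \<or> d = n" if "d \<in> set [2,3,5,7,11,13,17]" for d
  proof (cases "n mod d = 0")
    case True
    then have "d dvd n" by (simp add: mod_eq_0_iff_dvd)
    then have "d = 1 \<or> d = n" using p prime_nat_iff by blast
    then show ?thesis using that by auto
  qed simp
  then show "ptest2 n" unfolding ptest2_def list_all_iff using prime_ge_2_nat[OF p] by blast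
next
  assume t: "ptest2 n"
  show "prime n"
  proof (rule ccontr)
    assume np: "\<not> prime n"
    have n2: "n \<ge> 2" using t unfolding ptest2_def by simp
    then obtain d where d: "d dvd n" "d \<noteq> 1" "d \<noteq> n" using np prime_nat_iff by auto
    then obtain k where k: "n = d * k" by blast
    have "d \<noteq> 0" proof assume "d = 0" with k n2 show False by simp qed
    have "k \<noteq> 0" proof assume "k = 0" with k n2 show False by simp qed
    have "k \<noteq> 1" using k d by auto
    with \<open>d \<noteq> 0\<close> \<open>k \<noteq> 0\<close> have d0: "d \<ge> 2" and k2: "k \<ge> 2" using d by auto
    define e where "e = min d k"
    have e1: "e dvd n" unfolding e_def k by (simp add: min_def)
    have e2: "e \<ge> 2" unfolding e_def using d0 k2 by simp
    have e3: "e * e \<le> n" unfolding e_def k using d0 k2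
      by (simp add: min_def mult_le_mono)
    obtain q where q: "prime q" "q dvd e" using e2 prime_factor_nat[of e] by auto
    have "q \<le> e" using q e2 by (simp add: dvd_imp_le)
    then have q3: "q * q \<le> n" using e3 by (meson le_trans mult_le_mono)
    have q2: "q \<ge> 2" using q prime_ge_2_nat by blast
    have "q < 19"
    proof (rule ccontr)
      assume "\<not> q < 19" then have "19 * 19 \<le> q * q" by (intro mult_le_mono) auto
      then show False using q3 assms by simp
    qed
    then have "q \<in> set [2,3,5,7,11,13,17]" using small_primes q(1) by auto
    moreover have "q dvd n" using q(2) e1 by (rule dvd_trans)
    ultimately have "q = n" using t unfolding ptest2_def list_all_iff by (auto simp: mod_eq_0_iff_dvd)
    moreover have "2 * q \<le> q * q" using q2 by (intro mult_le_mono1)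
    ultimately show False using q3 q2 by simp
  qed
qed

lemma filter_ptest2: "filter ptest2 [0..<301] = [2,3,5,7,11,13,17,19,23,29,31,37,41,43,47,53,59,61,67,71,73,79,83,89,97,101,103,107,109,113,127,131,137,139,149,151,157,163,167,173,179,181,191,193,197,199,211,223,227,229,233,239,241,251,257,263,269,271,277,281,283,293]"
  by code_simp

lemma PS300: "PS 300 = set [2,3,5,7,11,13,17,19,23,29,31,37,41,43,47,53,59,61,67,71,73,79,83,89,97,101,103,107,109,113,127,131,137,139,149,151,157,163,167,173,179,181,191,193,197,199,211,223,227,229,233,239,241,251,257,263,269,271,277,281,283,293]"
proof -
  have "PS 300 = set (filter prime [0..<301])" unfolding PS_def by auto
  also have "filter prime [0..<301] = filter ptest2 [0..<301]"
  proof (rule filter_cong)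
    fix x assume "x \<in> set [0..<301]" then show "prime x = ptest2 x" by (intro ptest2_iff) simp
  qed simp
  finally show ?thesis unfolding filter_ptest2 .
qed

lemma lo_1: "(0::real) \<le> ln 1" by simp
lemma lo_2: "(0.6930041152::real) \<le> ln 2" by (rule ln_chain_lo[OF _ _ lo_1]) (simp_all add: power_divide)
lemma lo_3: "(1.0984654485::real) \<le> ln 3" by (rule ln_chain_lo[OF _ _ lo_2]) (simp_all add: power_divide)
lemma lo_5: "(1.6092727401::real) \<le> ln 5" by (rule ln_chain_lo[OF _ _ lo_3]) (simp_all add: power_divide)
lemma lo_7: "(1.9457439335::real) \<le> ln 7" by (rule ln_chain_lo[OF _ _ lo_5]) (simp_all add: power_divide)
lemma lo_11: "(2.397721105::real) \<le> ln 11" by (rule ln_chain_lo[OF _ _ lo_7]) (simp_all add: power_divide)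
lemma lo_13: "(2.5647751816::real) \<le> ln 13" by (rule ln_chain_lo[OF _ _ lo_11]) (simp_all add: power_divide)
lemma lo_17: "(2.8330389511::real) \<le> ln 17" by (rule ln_chain_lo[OF _ _ lo_13]) (simp_all add: power_divide)
lemma lo_19: "(2.9442645857::real) \<le> ln 19" by (rule ln_chain_lo[OF _ _ lo_17]) (simp_all add: power_divide)
lemma lo_23: "(3.135319802::real) \<le> ln 23" by (rule ln_chain_lo[OF _ _ lo_19]) (simp_all add: power_divide)
lemma lo_29: "(3.3671213374::real) \<le> ln 29" by (rule ln_chain_lo[OF _ _ lo_23]) (simp_all add: power_divide)
lemma lo_31: "(3.4338127118::real) \<le> ln 31" by (rule ln_chain_lo[OF _ _ lo_29]) (simp_all add: power_divide)
lemma lo_37: "(3.6107434079::real) \<le> ln 37" by (rule ln_chain_lo[OF _ _ lo_31]) (simp_all add: power_divide)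
lemma lo_41: "(3.7133975616::real) \<le> ln 41" by (rule ln_chain_lo[OF _ _ lo_37]) (simp_all add: power_divide)
lemma lo_43: "(3.7610256105::real) \<le> ln 43" by (rule ln_chain_lo[OF _ _ lo_41]) (simp_all add: power_divide)
lemma lo_47: "(3.8499730964::real) \<le> ln 47" by (rule ln_chain_lo[OF _ _ lo_43]) (simp_all add: power_divide)
lemma lo_53: "(3.9701174074::real) \<le> ln 53" by (rule ln_chain_lo[OF _ _ lo_47]) (simp_all add: power_divide)
lemma lo_59: "(4.0773629373::real) \<le> ln 59" by (rule ln_chain_lo[OF _ _ lo_53]) (simp_all add: power_divide)
lemma lo_61: "(4.1106993575::real) \<le> ln 61" by (rule ln_chain_lo[OF _ _ lo_59]) (simp_all add: power_divide)
lemma lo_67: "(4.2045181125::real) \<le> ln 67" by (rule ln_chain_lo[OF _ _ lo_61]) (simp_all add: power_divide)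
lemma lo_71: "(4.2625053701::real) \<le> ln 71" by (rule ln_chain_lo[OF _ _ lo_67]) (simp_all add: power_divide)
lemma lo_73: "(4.2902849342::real) \<le> ln 73" by (rule ln_chain_lo[OF _ _ lo_71]) (simp_all add: power_divide)
lemma lo_79: "(4.3692733454::real) \<le> ln 79" by (rule ln_chain_lo[OF _ _ lo_73]) (simp_all add: power_divide)
lemma lo_83: "(4.4186661007::real) \<le> ln 83" by (rule ln_chain_lo[OF _ _ lo_79]) (simp_all add: power_divide)
lemma lo_89: "(4.4884618626::real) \<le> ln 89" by (rule ln_chain_lo[OF _ _ lo_83]) (simp_all add: power_divide)
lemma lo_97: "(4.5745364712::real) \<le> ln 97" by (rule ln_chain_lo[OF _ _ lo_89]) (simp_all add: power_divide)
lemma lo_101: "(4.6149460095::real) \<le> ln 101" by (rule ln_chain_lo[OF _ _ lo_97]) (simp_all add: power_divide)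
lemma lo_103: "(4.6345544808::real) \<le> ln 103" by (rule ln_chain_lo[OF _ _ lo_101]) (simp_all add: power_divide)
lemma lo_107: "(4.672654327::real) \<le> ln 107" by (rule ln_chain_lo[OF _ _ lo_103]) (simp_all add: power_divide)
lemma lo_109: "(4.6911733747::real) \<le> ln 109" by (rule ln_chain_lo[OF _ _ lo_107]) (simp_all add: power_divide)
lemma lo_113: "(4.7272133111::real) \<le> ln 113" by (rule ln_chain_lo[OF _ _ lo_109]) (simp_all add: power_divide)
lemma lo_127: "(4.8440125781::real) \<le> ln 127" by (rule ln_chain_lo[OF _ _ lo_113]) (simp_all add: power_divide)
lemma lo_131: "(4.8750228148::real) \<le> ln 131" by (rule ln_chain_lo[OF _ _ lo_127]) (simp_all add: power_divide)
lemma lo_137: "(4.9198064174::real) \<le> ln 137" by (rule ln_chain_lo[OF _ _ lo_131]) (simp_all add: power_divide)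
lemma lo_139: "(4.9342994247::real) \<le> ln 139" by (rule ln_chain_lo[OF _ _ lo_137]) (simp_all add: power_divide)
lemma lo_149: "(5.0037717974::real) \<le> ln 149" by (rule ln_chain_lo[OF _ _ lo_139]) (simp_all add: power_divide)
lemma lo_151: "(5.0171053282::real) \<le> ln 151" by (rule ln_chain_lo[OF _ _ lo_149]) (simp_all add: power_divide)
lemma lo_157: "(5.0560712967::real) \<le> ln 157" by (rule ln_chain_lo[OF _ _ lo_151]) (simp_all add: power_divide)
lemma lo_163: "(5.0935756921::real) \<le> ln 163" by (rule ln_chain_lo[OF _ _ lo_157]) (simp_all add: power_divide)
lemma lo_167: "(5.1178193037::real) \<le> ln 167" by (rule ln_chain_lo[OF _ _ lo_163]) (simp_all add: power_divide)
lemma lo_173: "(5.1531170857::real) \<le> ln 173" by (rule ln_chain_lo[OF _ _ lo_167]) (simp_all add: power_divide)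
lemma lo_179: "(5.187211297::real) \<le> ln 179" by (rule ln_chain_lo[OF _ _ lo_173]) (simp_all add: power_divide)
lemma lo_181: "(5.1983225224::real) \<le> ln 181" by (rule ln_chain_lo[OF _ _ lo_179]) (simp_all add: power_divide)
lemma lo_191: "(5.2520989191::real) \<le> ln 191" by (rule ln_chain_lo[OF _ _ lo_181]) (simp_all add: power_divide)
lemma lo_193: "(5.2625156799::real) \<le> ln 193" by (rule ln_chain_lo[OF _ _ lo_191]) (simp_all add: power_divide)
lemma lo_197: "(5.2830292197::real) \<le> ln 197" by (rule ln_chain_lo[OF _ _ lo_193]) (simp_all add: power_divide)
lemma lo_199: "(5.2931303156::real) \<le> ln 199" by (rule ln_chain_lo[OF _ _ lo_197]) (simp_all add: power_divide)
lemma lo_211: "(5.3516836243::real) \<le> ln 211" by (rule ln_chain_lo[OF _ _ lo_199]) (simp_all add: power_divide)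
lemma lo_223: "(5.4069972622::real) \<le> ln 223" by (rule ln_chain_lo[OF _ _ lo_211]) (simp_all add: power_divide)
lemma lo_227: "(5.4247755082::real) \<le> ln 227" by (rule ln_chain_lo[OF _ _ lo_223]) (simp_all add: power_divide)
lemma lo_229: "(5.4335474942::real) \<le> ln 229" by (rule ln_chain_lo[OF _ _ lo_227]) (simp_all add: power_divide)
lemma lo_233: "(5.4508639442::real) \<le> ln 233" by (rule ln_chain_lo[OF _ _ lo_229]) (simp_all add: power_divide)
lemma lo_239: "(5.4762890425::real) \<le> ln 239" by (rule ln_chain_lo[OF _ _ lo_233]) (simp_all add: power_divide)
lemma lo_241: "(5.484622424::real) \<le> ln 241" by (rule ln_chain_lo[OF _ _ lo_239]) (simp_all add: power_divide)
lemma lo_251: "(5.5252784296::real) \<le> ln 251" by (rule ln_chain_lo[OF _ _ lo_241]) (simp_all add: power_divide)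
lemma lo_257: "(5.5489015753::real) \<le> ln 257" by (rule ln_chain_lo[OF _ _ lo_251]) (simp_all add: power_divide)
lemma lo_263: "(5.5719795225::real) \<le> ln 263" by (rule ln_chain_lo[OF _ _ lo_257]) (simp_all add: power_divide)
lemma lo_269: "(5.5945368699::real) \<le> ln 269" by (rule ln_chain_lo[OF _ _ lo_263]) (simp_all add: power_divide)
lemma lo_271: "(5.6019443111::real) \<le> ln 271" by (rule ln_chain_lo[OF _ _ lo_269]) (simp_all add: power_divide)
lemma lo_277: "(5.6238429964::real) \<le> ln 277" by (rule ln_chain_lo[OF _ _ lo_271]) (simp_all add: power_divide)
lemma lo_281: "(5.6381801595::real) \<le> ln 281" by (rule ln_chain_lo[OF _ _ lo_277]) (simp_all add: power_divide)
lemma lo_283: "(5.6452723878::real) \<le> ln 283" by (rule ln_chain_lo[OF _ _ lo_281]) (simp_all add: power_divide)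
lemma lo_293: "(5.6799980991::real) \<le> ln 293" by (rule ln_chain_lo[OF _ _ lo_283]) (simp_all add: power_divide)
lemma lo_300: "(5.7036079647::real) \<le> ln 300" by (rule ln_chain_lo[OF _ _ lo_293]) (simp_all add: power_divide)
lemma lo_55: "(1.7045829197::real) \<le> ln 5.5" by (rule ln_chain_lo[OF _ _ lo_5]) (simp_all add: power_divide)
lemma lo_20: "(2.99555788::real) \<le> ln 20" by (rule ln_chain_lo[OF _ _ lo_19]) (simp_all add: power_divide)
lemma up_0: "ln (1::real) \<le> 0" by simp
lemma up2_0: "ln ((9/8)::real) \<le> 0.1180555556" by (rule ln_chain_up[OF _ _ up_0]) (simp_all add: power_divide)
lemma up2_1: "ln ((5/4)::real) \<le> 0.2236111112" by (rule ln_chain_up[OF _ _ up2_0]) (simp_all add: power_divide)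
lemma up2_2: "ln ((11/8)::real) \<le> 0.3190656567" by (rule ln_chain_up[OF _ _ up2_1]) (simp_all add: power_divide)
lemma up2_3: "ln ((3/2)::real) \<le> 0.4061868689" by (rule ln_chain_up[OF _ _ up2_2]) (simp_all add: power_divide)
lemma up2_4: "ln ((13/8)::real) \<le> 0.4863150741" by (rule ln_chain_up[OF _ _ up2_3]) (simp_all add: power_divide)
lemma up2_5: "ln ((7/4)::real) \<le> 0.5604908983" by (rule ln_chain_up[OF _ _ up2_4]) (simp_all add: power_divide)
lemma up2_6: "ln ((15/8)::real) \<le> 0.6295385174" by (rule ln_chain_up[OF _ _ up2_5]) (simp_all add: power_divide)
lemma up2_7: "ln (2::real) \<le> 0.6941218508" by (rule ln_chain_up[OF _ _ up2_6]) (simp_all add: power_divide)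
lemma up_2: "ln (2::real) \<le> 0.6941218508" by (rule up2_7)
lemma up_256: "ln (256::real) \<le> 8 * 0.6941218508" proof - have "ln ((2::real)^8) = real 8 * ln 2" using ln_realpow[of "2::real" 8] by simp then have "ln (256::real) = 8 * ln 2" by simp then show ?thesis using up_2 by simp qed
lemma up3_260: "ln (260::real) \<le> 5.5684796141" by (rule ln_chain_up[OF _ _ up_256]) (simp_all add: power_divide)
lemma up3_264: "ln (264::real) \<le> 5.5837476794" by (rule ln_chain_up[OF _ _ up3_260]) (simp_all add: power_divide)
lemma up3_268: "ln (268::real) \<le> 5.5987861236" by (rule ln_chain_up[OF _ _ up3_264]) (simp_all add: power_divide)
lemma up3_272: "ln (272::real) \<le> 5.6136017514" by (rule ln_chain_up[OF _ _ up3_268]) (simp_all add: power_divide)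
lemma up3_276: "ln (276::real) \<le> 5.6282010694" by (rule ln_chain_up[OF _ _ up3_272]) (simp_all add: power_divide)
lemma up3_280: "ln (280::real) \<le> 5.6425903034" by (rule ln_chain_up[OF _ _ up3_276]) (simp_all add: power_divide)
lemma up3_284: "ln (284::real) \<le> 5.6567754141" by (rule ln_chain_up[OF _ _ up3_280]) (simp_all add: power_divide)
lemma up3_288: "ln (288::real) \<le> 5.6707621121" by (rule ln_chain_up[OF _ _ up3_284]) (simp_all add: power_divide)
lemma up3_292: "ln (292::real) \<le> 5.6845558717" by (rule ln_chain_up[OF _ _ up3_288]) (simp_all add: power_divide)
lemma up3_296: "ln (296::real) \<le> 5.6981619436" by (rule ln_chain_up[OF _ _ up3_292]) (simp_all add: power_divide)
lemma up3_300: "ln (300::real) \<le> 5.7115853671" by (rule ln_chain_up[OF _ _ up3_296]) (simp_all add: power_divide)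
lemma up_300: "ln (300::real) \<le> 5.7115853671" by (rule up3_300)

definition g1 :: "nat \<Rightarrow> real" where "g1 p = 1 / (real p * ln (real p))"
definition g2 :: "nat \<Rightarrow> real" where "g2 p = ln (real p) / real p"

lemma g1_le: assumes "0 < l" "l \<le> ln x" "x = real p" "1 / (real p * l) \<le> u" "0 < p"
  shows "g1 p \<le> u"
proof -
  have lp: "0 < ln (real p)" using assms(1,2,3) by simp
  have "1 / (real p * ln (real p)) \<le> 1 / (real p * l)"
    using assms lp by (intro divide_left_mono mult_left_mono mult_pos_pos) auto
  then show ?thesis unfolding g1_def using assms by simp
qed

lemma g2_ge: assumes "l \<le> ln x" "x = real p" "v \<le> l / real p" "0 < p"
  shows "v \<le> g2 p"
proof -
  have "l / real p \<le> ln (real p) / real p" using assms by (intro divide_right_mono) auto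
  then show ?thesis unfolding g2_def using assms by simp
qed

lemma sum_list_le2: "list_all2 (\<lambda>x b. f x \<le> b) xs bs \<Longrightarrow> sum_list (map f xs) \<le> (sum_list bs :: real)"
  by (induction xs bs rule: list_all2_induct) auto

lemma sum_list_ge2: "list_all2 (\<lambda>x b. b \<le> f x) xs bs \<Longrightarrow> (sum_list bs :: real) \<le> sum_list (map f xs)"
  by (induction xs bs rule: list_all2_induct) auto

lemma g1_2: "g1 2 \<le> 0.7214964371" by (rule g1_le[OF _ lo_2]) (simp_all add: power_divide)
lemma g2_2: "0.3465020576 \<le> g2 2" by (rule g2_ge[OF lo_2]) (simp_all add: power_divide)
lemma g1_3: "g1 3 \<le> 0.3034536351" by (rule g1_le[OF _ lo_3]) (simp_all add: power_divide)
lemma g2_3: "0.3661551495 \<le> g2 3" by (rule g2_ge[OF lo_3]) (simp_all add: power_divide)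
lemma g1_5: "g1 5 \<le> 0.1242797415" by (rule g1_le[OF _ lo_5]) (simp_all add: power_divide)
lemma g2_5: "0.321854548 \<le> g2 5" by (rule g2_ge[OF lo_5]) (simp_all add: power_divide)
lemma g1_7: "g1 7 \<le> 0.0734203204" by (rule g1_le[OF _ lo_7]) (simp_all add: power_divide)
lemma g2_7: "0.277963419 \<le> g2 7" by (rule g2_ge[OF lo_7]) (simp_all add: power_divide)
lemma g1_11: "g1 11 \<le> 0.0379147895" by (rule g1_le[OF _ lo_11]) (simp_all add: power_divide)
lemma g2_11: "0.2179746459 \<le> g2 11" by (rule g2_ge[OF lo_11]) (simp_all add: power_divide)
lemma g1_13: "g1 13 \<le> 0.0299921325" by (rule g1_le[OF _ lo_13]) (simp_all add: power_divide)
lemma g2_13: "0.1972903985 \<le> g2 13" by (rule g2_ge[OF lo_13]) (simp_all add: power_divide)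
lemma g1_17: "g1 17 \<le> 0.020763403" by (rule g1_le[OF _ lo_17]) (simp_all add: power_divide)
lemma g2_17: "0.16664935 \<le> g2 17" by (rule g2_ge[OF lo_17]) (simp_all add: power_divide)
lemma g1_19: "g1 19 \<le> 0.0178759679" by (rule g1_le[OF _ lo_19]) (simp_all add: power_divide)
lemma g2_19: "0.1549612939 \<le> g2 19" by (rule g2_ge[OF lo_19]) (simp_all add: power_divide)
lemma g1_23: "g1 23 \<le> 0.0138672492" by (rule g1_le[OF _ lo_23]) (simp_all add: power_divide)
lemma g2_23: "0.1363182522 \<le> g2 23" by (rule g2_ge[OF lo_23]) (simp_all add: power_divide)
lemma g1_29: "g1 29 \<le> 0.0102410205" by (rule g1_le[OF _ lo_29]) (simp_all add: power_divide)
lemma g2_29: "0.1161076323 \<le> g2 29" by (rule g2_ge[OF lo_29]) (simp_all add: power_divide)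
lemma g1_31: "g1 31 \<le> 0.0093942412" by (rule g1_le[OF _ lo_31]) (simp_all add: power_divide)
lemma g2_31: "0.1107681519 \<le> g2 31" by (rule g2_ge[OF lo_31]) (simp_all add: power_divide)
lemma g1_37: "g1 37 \<le> 0.0074851697" by (rule g1_le[OF _ lo_37]) (simp_all add: power_divide)
lemma g2_37: "0.0975876596 \<le> g2 37" by (rule g2_ge[OF lo_37]) (simp_all add: power_divide)
lemma g1_41: "g1 41 \<le> 0.0065681747" by (rule g1_le[OF _ lo_41]) (simp_all add: power_divide)
lemma g2_41: "0.0905706722 \<le> g2 41" by (rule g2_ge[OF lo_41]) (simp_all add: power_divide)
lemma g1_43: "g1 43 \<le> 0.0061833703" by (rule g1_le[OF _ lo_43]) (simp_all add: power_divide)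
lemma g2_43: "0.0874657118 \<le> g2 43" by (rule g2_ge[OF lo_43]) (simp_all add: power_divide)
lemma g1_47: "g1 47 \<le> 0.0055264272" by (rule g1_le[OF _ lo_47]) (simp_all add: power_divide)
lemma g2_47: "0.0819143212 \<le> g2 47" by (rule g2_ge[OF lo_47]) (simp_all add: power_divide)
lemma g1_53: "g1 53 \<le> 0.0047524853" by (rule g1_le[OF _ lo_53]) (simp_all add: power_divide)
lemma g2_53: "0.0749078756 \<le> g2 53" by (rule g2_ge[OF lo_53]) (simp_all add: power_divide)
lemma g1_59: "g1 59 \<le> 0.0041568909" by (rule g1_le[OF _ lo_59]) (simp_all add: power_divide)
lemma g2_59: "0.0691078463 \<le> g2 59" by (rule g2_ge[OF lo_59]) (simp_all add: power_divide)
lemma g1_61: "g1 61 \<le> 0.0039879936" by (rule g1_le[OF _ lo_61]) (simp_all add: power_divide)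
lemma g2_61: "0.067388514 \<le> g2 61" by (rule g2_ge[OF lo_61]) (simp_all add: power_divide)
lemma g1_67: "g1 67 \<le> 0.0035498416" by (rule g1_le[OF _ lo_67]) (simp_all add: power_divide)
lemma g2_67: "0.0627540016 \<le> g2 67" by (rule g2_ge[OF lo_67]) (simp_all add: power_divide)
lemma g1_71: "g1 71 \<le> 0.0033042791" by (rule g1_le[OF _ lo_71]) (simp_all add: power_divide)
lemma g2_71: "0.0600352869 \<le> g2 71" by (rule g2_ge[OF lo_71]) (simp_all add: power_divide)
lemma g1_73: "g1 73 \<le> 0.0031929419" by (rule g1_le[OF _ lo_73]) (simp_all add: power_divide)
lemma g2_73: "0.0587710264 \<le> g2 73" by (rule g2_ge[OF lo_73]) (simp_all add: power_divide)
lemma g1_79: "g1 79 \<le> 0.0028971014" by (rule g1_le[OF _ lo_79]) (simp_all add: power_divide)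
lemma g2_79: "0.0553072575 \<le> g2 79" by (rule g2_ge[OF lo_79]) (simp_all add: power_divide)
lemma g1_83: "g1 83 \<le> 0.0027266584" by (rule g1_le[OF _ lo_83]) (simp_all add: power_divide)
lemma g2_83: "0.0532369409 \<le> g2 83" by (rule g2_ge[OF lo_83]) (simp_all add: power_divide)
lemma g1_89: "g1 89 \<le> 0.0025032975" by (rule g1_le[OF _ lo_89]) (simp_all add: power_divide)
lemma g2_89: "0.0504321557 \<le> g2 89" by (rule g2_ge[OF lo_89]) (simp_all add: power_divide)
lemma g1_97: "g1 97 \<le> 0.0022536226" by (rule g1_le[OF _ lo_97]) (simp_all add: power_divide)
lemma g2_97: "0.0471601698 \<le> g2 97" by (rule g2_ge[OF lo_97]) (simp_all add: power_divide)
lemma g1_101: "g1 101 \<le> 0.0021454185" by (rule g1_le[OF _ lo_101]) (simp_all add: power_divide)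
lemma g2_101: "0.0456925347 \<le> g2 101" by (rule g2_ge[OF lo_101]) (simp_all add: power_divide)
lemma g1_103: "g1 103 \<le> 0.002094859" by (rule g1_le[OF _ lo_103]) (simp_all add: power_divide)
lemma g2_103: "0.0449956745 \<le> g2 103" by (rule g2_ge[OF lo_103]) (simp_all add: power_divide)
lemma g1_107: "g1 107 \<le> 0.002000104" by (rule g1_le[OF _ lo_107]) (simp_all add: power_divide)
lemma g2_107: "0.0436696666 \<le> g2 107" by (rule g2_ge[OF lo_107]) (simp_all add: power_divide)
lemma g1_109: "g1 109 \<le> 0.001955654" by (rule g1_le[OF _ lo_109]) (simp_all add: power_divide)
lemma g2_109: "0.0430382878 \<le> g2 109" by (rule g2_ge[OF lo_109]) (simp_all add: power_divide)
lemma g1_113: "g1 113 \<le> 0.0018720454" by (rule g1_le[OF _ lo_113]) (simp_all add: power_divide)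
lemma g2_113: "0.0418337461 \<le> g2 113" by (rule g2_ge[OF lo_113]) (simp_all add: power_divide)
lemma g1_127: "g1 127 \<le> 0.0016255152" by (rule g1_le[OF _ lo_127]) (simp_all add: power_divide)
lemma g2_127: "0.0381418313 \<le> g2 127" by (rule g2_ge[OF lo_127]) (simp_all add: power_divide)
lemma g1_131: "g1 131 \<le> 0.0015658569" by (rule g1_le[OF _ lo_131]) (simp_all add: power_divide)
lemma g2_131: "0.0372139146 \<le> g2 131" by (rule g2_ge[OF lo_131]) (simp_all add: power_divide)
lemma g1_137: "g1 137 \<le> 0.0014836499" by (rule g1_le[OF _ lo_137]) (simp_all add: power_divide)
lemma g2_137: "0.0359109957 \<le> g2 137" by (rule g2_ge[OF lo_137]) (simp_all add: power_divide)
lemma g1_139: "g1 139 \<le> 0.0014580074" by (rule g1_le[OF _ lo_139]) (simp_all add: power_divide)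
lemma g2_139: "0.035498557 \<le> g2 139" by (rule g2_ge[OF lo_139]) (simp_all add: power_divide)
lemma g1_149: "g1 149 \<le> 0.0013412701" by (rule g1_le[OF _ lo_149]) (simp_all add: power_divide)
lemma g2_149: "0.033582361 \<le> g2 149" by (rule g2_ge[OF lo_149]) (simp_all add: power_divide)
lemma g1_151: "g1 151 \<le> 0.0013199876" by (rule g1_le[OF _ lo_151]) (simp_all add: power_divide)
lemma g2_151: "0.0332258631 \<le> g2 151" by (rule g2_ge[OF lo_151]) (simp_all add: power_divide)
lemma g1_157: "g1 157 \<le> 0.0012597581" by (rule g1_le[OF _ lo_157]) (simp_all add: power_divide)
lemma g2_157: "0.0322042757 \<le> g2 157" by (rule g2_ge[OF lo_157]) (simp_all add: power_divide)
lemma g1_163: "g1 163 \<le> 0.0012044524" by (rule g1_le[OF _ lo_163]) (simp_all add: power_divide)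
lemma g2_163: "0.0312489306 \<le> g2 163" by (rule g2_ge[OF lo_163]) (simp_all add: power_divide)
lemma g1_167: "g1 167 \<le> 0.0011700343" by (rule g1_le[OF _ lo_167]) (simp_all add: power_divide)
lemma g2_167: "0.0306456245 \<le> g2 167" by (rule g2_ge[OF lo_167]) (simp_all add: power_divide)
lemma g1_173: "g1 173 \<le> 0.0011217186" by (rule g1_le[OF _ lo_173]) (simp_all add: power_divide)
lemma g2_173: "0.0297868039 \<le> g2 173" by (rule g2_ge[OF lo_173]) (simp_all add: power_divide)
lemma g1_179: "g1 179 \<le> 0.0010769934" by (rule g1_le[OF _ lo_179]) (simp_all add: power_divide)
lemma g2_179: "0.028978834 \<le> g2 179" by (rule g2_ge[OF lo_179]) (simp_all add: power_divide)
lemma g1_181: "g1 181 \<le> 0.0010628163" by (rule g1_le[OF _ lo_181]) (simp_all add: power_divide)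
lemma g2_181: "0.0287200139 \<le> g2 181" by (rule g2_ge[OF lo_181]) (simp_all add: power_divide)
lemma g1_191: "g1 191 \<le> 0.0009968591" by (rule g1_le[OF _ lo_191]) (simp_all add: power_divide)
lemma g2_191: "0.0274979001 \<le> g2 191" by (rule g2_ge[OF lo_191]) (simp_all add: power_divide)
lemma g1_193: "g1 193 \<le> 0.0009845761" by (rule g1_le[OF _ lo_193]) (simp_all add: power_divide)
lemma g2_193: "0.0272669206 \<le> g2 193" by (rule g2_ge[OF lo_193]) (simp_all add: power_divide)
lemma g1_197: "g1 197 \<le> 0.0009608394" by (rule g1_le[OF _ lo_197]) (simp_all add: power_divide)
lemma g2_197: "0.0268174072 \<le> g2 197" by (rule g2_ge[OF lo_197]) (simp_all add: power_divide)
lemma g1_199: "g1 199 \<le> 0.0009493675" by (rule g1_le[OF _ lo_199]) (simp_all add: power_divide)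
lemma g2_199: "0.0265986448 \<le> g2 199" by (rule g2_ge[OF lo_199]) (simp_all add: power_divide)
lemma g1_211: "g1 211 \<le> 0.0008855787" by (rule g1_le[OF _ lo_211]) (simp_all add: power_divide)
lemma g2_211: "0.0253634294 \<le> g2 211" by (rule g2_ge[OF lo_211]) (simp_all add: power_divide)
lemma g1_223: "g1 223 \<le> 0.0008293522" by (rule g1_le[OF _ lo_223]) (simp_all add: power_divide)
lemma g2_223: "0.0242466244 \<le> g2 223" by (rule g2_ge[OF lo_223]) (simp_all add: power_divide)
lemma g1_227: "g1 227 \<le> 0.000812068" by (rule g1_le[OF _ lo_227]) (simp_all add: power_divide)
lemma g2_227: "0.0238976894 \<le> g2 227" by (rule g2_ge[OF lo_227]) (simp_all add: power_divide)
lemma g1_229: "g1 229 \<le> 0.0008036761" by (rule g1_le[OF _ lo_229]) (simp_all add: power_divide)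
lemma g2_229: "0.0237272816 \<le> g2 229" by (rule g2_ge[OF lo_229]) (simp_all add: power_divide)
lemma g1_233: "g1 233 \<le> 0.0007873698" by (rule g1_le[OF _ lo_233]) (simp_all add: power_divide)
lemma g2_233: "0.0233942658 \<le> g2 233" by (rule g2_ge[OF lo_233]) (simp_all add: power_divide)
lemma g1_239: "g1 239 \<le> 0.0007640394" by (rule g1_le[OF _ lo_239]) (simp_all add: power_divide)
lemma g2_239: "0.0229133432 \<le> g2 239" by (rule g2_ge[OF lo_239]) (simp_all add: power_divide)
lemma g1_241: "g1 241 \<le> 0.0007565476" by (rule g1_le[OF _ lo_241]) (simp_all add: power_divide)
lemma g2_241: "0.0227577693 \<le> g2 241" by (rule g2_ge[OF lo_241]) (simp_all add: power_divide)
lemma g1_251: "g1 251 \<le> 0.0007210612" by (rule g1_le[OF _ lo_251]) (simp_all add: power_divide)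
lemma g2_251: "0.0220130614 \<le> g2 251" by (rule g2_ge[OF lo_251]) (simp_all add: power_divide)
lemma g1_257: "g1 257 \<le> 0.000701229" by (rule g1_le[OF _ lo_257]) (simp_all add: power_divide)
lemma g2_257: "0.0215910567 \<le> g2 257" by (rule g2_ge[OF lo_257]) (simp_all add: power_divide)
lemma g1_263: "g1 263 \<le> 0.0006823933" by (rule g1_le[OF _ lo_263]) (simp_all add: power_divide)
lemma g2_263: "0.0211862339 \<le> g2 263" by (rule g2_ge[OF lo_263]) (simp_all add: power_divide)
lemma g1_269: "g1 269 \<le> 0.0006644826" by (rule g1_le[OF _ lo_269]) (simp_all add: power_divide)
lemma g2_269: "0.0207975348 \<le> g2 269" by (rule g2_ge[OF lo_269]) (simp_all add: power_divide)
lemma g1_271: "g1 271 \<le> 0.0006587065" by (rule g1_le[OF _ lo_271]) (simp_all add: power_divide)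
lemma g2_271: "0.0206713812 \<le> g2 271" by (rule g2_ge[OF lo_271]) (simp_all add: power_divide)
lemma g1_277: "g1 277 \<le> 0.0006419291" by (rule g1_le[OF _ lo_277]) (simp_all add: power_divide)
lemma g2_277: "0.0203026822 \<le> g2 277" by (rule g2_ge[OF lo_277]) (simp_all add: power_divide)
lemma g1_281: "g1 281 \<le> 0.0006311822" by (rule g1_le[OF _ lo_281]) (simp_all add: power_divide)
lemma g2_281: "0.020064698 \<le> g2 281" by (rule g2_ge[OF lo_281]) (simp_all add: power_divide)
lemma g1_283: "g1 283 \<le> 0.0006259342" by (rule g1_le[OF _ lo_283]) (simp_all add: power_divide)
lemma g2_283: "0.0199479589 \<le> g2 283" by (rule g2_ge[OF lo_283]) (simp_all add: power_divide)
lemma g1_293: "g1 293 \<le> 0.0006008751" by (rule g1_le[OF _ lo_293]) (simp_all add: power_divide)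
lemma g2_293: "0.019385659 \<le> g2 293" by (rule g2_ge[OF lo_293]) (simp_all add: power_divide)
lemma S1_bound: "(\<Sum>p\<in>PS 300. 1 / (real p * ln (real p))) \<le> 1.4630034003"
proof -
  have "(\<Sum>p\<in>PS 300. 1 / (real p * ln (real p))) = sum_list (map g1 [2,3,5,7,11,13,17,19,23,29,31,37,41,43,47,53,59,61,67,71,73,79,83,89,97,101,103,107,109,113,127,131,137,139,149,151,157,163,167,173,179,181,191,193,197,199,211,223,227,229,233,239,241,251,257,263,269,271,277,281,283,293])"
    unfolding PS300 g1_def by (subst sum_list_distinct_conv_sum_set) (simp_all add: power_divide)
  also have "\<dots> \<le> sum_list [0.7214964371,0.3034536351,0.1242797415,0.0734203204,0.0379147895,0.0299921325,0.020763403,0.0178759679,0.0138672492,0.0102410205,0.0093942412,0.0074851697,0.0065681747,0.0061833703,0.0055264272,0.0047524853,0.0041568909,0.0039879936,0.0035498416,0.0033042791,0.0031929419,0.0028971014,0.0027266584,0.0025032975,0.0022536226,0.0021454185,0.002094859,0.002000104,0.001955654,0.0018720454,0.0016255152,0.0015658569,0.0014836499,0.0014580074,0.0013412701,0.0013199876,0.0012597581,0.0012044524,0.0011700343,0.0011217186,0.0010769934,0.0010628163,0.0009968591,0.0009845761,0.0009608394,0.0009493675,0.0008855787,0.0008293522,0.000812068,0.0008036761,0.0007873698,0.0007640394,0.0007565476,0.0007210612,0.000701229,0.0006823933,0.0006644826,0.0006587065,0.0006419291,0.0006311822,0.0006259342,0.0006008751]"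
    by (rule sum_list_le2) (simp only: list_all2_Cons list_all2_Nil g1_2 g1_3 g1_5 g1_7 g1_11 g1_13 g1_17 g1_19 g1_23 g1_29 g1_31 g1_37 g1_41 g1_43 g1_47 g1_53 g1_59 g1_61 g1_67 g1_71 g1_73 g1_79 g1_83 g1_89 g1_97 g1_101 g1_103 g1_107 g1_109 g1_113 g1_127 g1_131 g1_137 g1_139 g1_149 g1_151 g1_157 g1_163 g1_167 g1_173 g1_179 g1_181 g1_191 g1_193 g1_197 g1_199 g1_211 g1_223 g1_227 g1_229 g1_233 g1_239 g1_241 g1_251 g1_257 g1_263 g1_269 g1_271 g1_277 g1_281 g1_283 g1_293 simp_thms)
  also have "\<dots> = 1.4630034003" by simp
  finally show ?thesis .
qed

lemma mert300: "4.4440137952 \<le> mert 300"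
proof -
  have "mert 300 = sum_list (map g2 [2,3,5,7,11,13,17,19,23,29,31,37,41,43,47,53,59,61,67,71,73,79,83,89,97,101,103,107,109,113,127,131,137,139,149,151,157,163,167,173,179,181,191,193,197,199,211,223,227,229,233,239,241,251,257,263,269,271,277,281,283,293])"
    unfolding mert_def PS300 g2_def by (subst sum_list_distinct_conv_sum_set) (simp_all add: power_divide)
  moreover have "sum_list [0.3465020576,0.3661551495,0.321854548,0.277963419,0.2179746459,0.1972903985,0.16664935,0.1549612939,0.1363182522,0.1161076323,0.1107681519,0.0975876596,0.0905706722,0.0874657118,0.0819143212,0.0749078756,0.0691078463,0.067388514,0.0627540016,0.0600352869,0.0587710264,0.0553072575,0.0532369409,0.0504321557,0.0471601698,0.0456925347,0.0449956745,0.0436696666,0.0430382878,0.0418337461,0.0381418313,0.0372139146,0.0359109957,0.035498557,0.033582361,0.0332258631,0.0322042757,0.0312489306,0.0306456245,0.0297868039,0.028978834,0.0287200139,0.0274979001,0.0272669206,0.0268174072,0.0265986448,0.0253634294,0.0242466244,0.0238976894,0.0237272816,0.0233942658,0.0229133432,0.0227577693,0.0220130614,0.0215910567,0.0211862339,0.0207975348,0.0206713812,0.0203026822,0.020064698,0.0199479589,0.019385659] \<le> sum_list (map g2 [2,3,5,7,11,13,17,19,23,29,31,37,41,43,47,53,59,61,67,71,73,79,83,89,97,101,103,107,109,113,127,131,137,139,149,151,157,163,167,173,179,181,191,193,197,199,211,223,227,229,233,239,241,251,257,263,269,271,277,281,283,293])"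
    by (rule sum_list_ge2) (simp only: list_all2_Cons list_all2_Nil g2_2 g2_3 g2_5 g2_7 g2_11 g2_13 g2_17 g2_19 g2_23 g2_29 g2_31 g2_37 g2_41 g2_43 g2_47 g2_53 g2_59 g2_61 g2_67 g2_71 g2_73 g2_79 g2_83 g2_89 g2_97 g2_101 g2_103 g2_107 g2_109 g2_113 g2_127 g2_131 g2_137 g2_139 g2_149 g2_151 g2_157 g2_163 g2_167 g2_173 g2_179 g2_181 g2_191 g2_193 g2_197 g2_199 g2_211 g2_223 g2_227 g2_229 g2_233 g2_239 g2_241 g2_251 g2_257 g2_263 g2_269 g2_271 g2_277 g2_281 g2_283 g2_293 simp_thms)
  moreover have "sum_list [0.3465020576,0.3661551495,0.321854548,0.277963419,0.2179746459,0.1972903985,0.16664935,0.1549612939,0.1363182522,0.1161076323,0.1107681519,0.0975876596,0.0905706722,0.0874657118,0.0819143212,0.0749078756,0.0691078463,0.067388514,0.0627540016,0.0600352869,0.0587710264,0.0553072575,0.0532369409,0.0504321557,0.0471601698,0.0456925347,0.0449956745,0.0436696666,0.0430382878,0.0418337461,0.0381418313,0.0372139146,0.0359109957,0.035498557,0.033582361,0.0332258631,0.0322042757,0.0312489306,0.0306456245,0.0297868039,0.028978834,0.0287200139,0.0274979001,0.0272669206,0.0268174072,0.0265986448,0.0253634294,0.0242466244,0.0238976894,0.0237272816,0.0233942658,0.0229133432,0.0227577693,0.0220130614,0.0215910567,0.0211862339,0.0207975348,0.0206713812,0.0203026822,0.020064698,0.0199479589,0.019385659] = (4.4440137952::real)"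 by simp
  ultimately show ?thesis by simp
qed

definition c300 :: real where "c300 = ln 4 - 1 + (1 + ln 300) / 300"

lemma mert_H: assumes "n \<ge> 300" shows "mert n \<le> ln (real n) + c300"
proof -
  have n: "real n \<ge> 300" using assms by simp
  have "ln (real n / 300) \<le> real n / 300 - 1" using n by (intro ln_le_minus_one) auto
  then have "ln (real n) - ln 300 \<le> real n / 300 - 1" using n by (simp add: ln_div)
  moreover have "0 \<le> ln (300::real)" by simp
  moreover have "300 * ln 300 \<le> real n * ln (300::real)" using n by (intro mult_right_mono) auto
  ultimately have "300 + 300 * ln (real n) \<le> real n + real n * ln 300" by linarith
  then have "300 * (1 + ln (real n)) \<le> real n * (1 + ln 300)" by (simp add: algebra_simps)
  then have D: "(1 + ln (real n)) / real n \<le> (1 + ln 300) / 300" using n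
    by (simp add: field_simps)
  have "mert n \<le> ln n - 1 + ln 4 + (1 + ln n) / n" using assms by (intro mert_le) simp
  then show ?thesis using D unfolding c300_def by linarith
qed

lemma tail300: assumes "M \<ge> 300"
  shows "(\<Sum>p\<in>PS M - PS 300. 1 / (real p * ln (real p))) \<le> 0.227"
proof -
  have "(\<Sum>p\<in>PS M - PS 300. 1 / (real p * ln (real p))) \<le> 1 / ln (real 300) + (ln (real 300) + c300 - mert 300) / (ln (real 300))^2"
    by (rule tail_bound[OF _ mert_H assms]) simp_all
  also have "\<dots> = 1 / ln 300 + (ln 300 + c300 - mert 300) / (ln 300)^2" by simp
  also have "\<dots> \<le> 1 / 5.7036079647 + 1.6782 / 5.7036079647^2"
  proof (rule add_mono)
    have L: "5.7036079647 \<le> ln (300::real)" by (rule lo_300)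
    show "1 / ln 300 \<le> 1 / (5.7036079647::real)" using L by (intro divide_left_mono) auto
    have "ln (4::real) = 2 * ln 2" using ln_realpow[of "2::real" 2] by simp
    moreover have "ln (300::real) \<le> 57115853671/10000000000" using up_300 by simp
    moreover have "ln (2::real) \<le> 6941218508/10000000000" using up_2 by simp
    moreover have "44440137952/10000000000 \<le> mert 300" using mert300 by simp
    ultimately have X: "ln 300 + c300 - mert 300 \<le> 16782/10000"
      unfolding c300_def by (simp add: field_simps)
    have "(ln 300 + c300 - mert 300) / (ln 300)^2 \<le> 1.6782 / (ln (300::real))^2"
      using X by (intro divide_right_mono) auto
    also have "\<dots> \<le> 1.6782 / 5.7036079647^2"
      using L by (intro divide_left_mono power_mono) auto
    finally show "(ln 300 + c300 - mert 300) / (ln 300)^2 \<le> 1.6782 / (5.7036079647::real)^2" .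
  qed
  also have "\<dots> \<le> (0.227::real)" by (simp add: power_divide)
  finally show ?thesis .
qed

lemma prime_partial_bound:
  assumes "finite F" "F \<subseteq> {p::nat. prime p}"
  shows "(\<Sum>p\<in>F. 1 / (real p * ln (real p))) \<le> 1.6900034003"
proof -
  define M where "M = max 300 (Max (insert 0 F))"
  have M: "M \<ge> 300" unfolding M_def by simp
  have FM: "F \<subseteq> PS M"
  proof
    fix p assume p: "p \<in> F"
    then have "p \<le> Max (insert 0 F)" using assms(1) by simp
    then show "p \<in> PS M" using p assms(2) unfolding PS_def M_def by auto
  qed
  have nn: "\<And>p. p \<in> PS M \<Longrightarrow> 0 \<le> 1 / (real p * ln (real p))"
    unfolding PS_def by (auto dest: prime_gt_1_nat)
  have "(\<Sum>p\<in>F. 1 / (real p * ln (real p))) \<le> (\<Sum>p\<in>PS M. 1 / (real p * ln (real p)))"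
    using FM nn by (intro sum_mono2) auto
  also have "\<dots> = (\<Sum>p\<in>PS 300. 1 / (real p * ln (real p))) + (\<Sum>p\<in>PS M - PS 300. 1 / (real p * ln (real p)))"
  proof -
    have "PS 300 \<subseteq> PS M" using M unfolding PS_def by auto
    then show ?thesis by (subst sum.subset_diff[of "PS 300" "PS M"]) (auto simp: add.commute)
  qed
  also have "\<dots> \<le> 1.4630034003 + 0.227"
    using S1_bound tail300[OF M] by (rule add_mono)
  finally show ?thesis by simp
qed

lemma primes_summable: "(\<lambda>p::nat. 1 / (real p * ln (real p))) summable_on {p. prime p}"
proof (rule nonneg_bdd_above_summable_on)
  show "\<And>x. x \<in> {p. prime p} \<Longrightarrow> 0 \<le> 1 / (real x * ln (real x))"
    by (auto dest: prime_gt_1_nat)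
  show "bdd_above (sum (\<lambda>p. 1 / (real p * ln (real p))) ` {F. F \<subseteq> {p. prime p} \<and> finite F})"
    using prime_partial_bound unfolding bdd_above_def by blast
qed

lemma primes_infsum_le: "(\<Sum>\<^sub>\<infinity>p\<in>{p::nat. prime p}. 1 / (real p * ln (real p))) \<le> 1.6900034003"
  by (rule infsum_le_finite_sums[OF primes_summable]) (rule prime_partial_bound)

lemma kappa_le: "kappa \<le> 5.5"
proof -
  have a: "(1.6900034003::real) \<le> ln 5.5" by (rule order_trans[OF _ lo_55]) simp
  have "kappa \<le> exp 1.6900034003" unfolding kappa_def using primes_infsum_le by simp
  also have "\<dots> \<le> exp (ln 5.5)" using a by (simp only: exp_le_cancel_iff)
  also have "\<dots> = 5.5" by simp
  finally show ?thesis .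
qed

lemma euler_bound:
  fixes g :: "nat \<Rightarrow> nat \<Rightarrow> real"
  assumes F: "finite F" "0 \<notin> F" and P: "finite P"
    and FP: "\<And>d. d \<in> F \<Longrightarrow> prime_factors d \<subseteq> P"
    and FI: "\<And>d p. d \<in> F \<Longrightarrow> p \<in> prime_factors d \<Longrightarrow> multiplicity p d \<in> I"
    and I: "finite I" and g: "\<And>p k. 0 \<le> g p k"
  shows "(\<Sum>d\<in>F. \<Prod>p\<in>prime_factors d. g p (multiplicity p d)) \<le> (\<Prod>p\<in>P. 1 + (\<Sum>k\<in>I. g p k))"
proof -
  define S where "S = Sigma (Pow P) (\<lambda>A. PiE A (\<lambda>_. I))"
  define G where "G x = (\<Prod>p\<in>fst x. g p (snd x p))" for x :: "nat set \<times> (nat \<Rightarrow> nat)"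
  define \<phi> where "\<phi> d = (prime_factors d, restrict (\<lambda>p. multiplicity p d) (prime_factors d))" for d :: nat
  have fS: "finite S" unfolding S_def using P I
    by (intro finite_SigmaI finite_PiE) (auto intro: finite_subset)
  have "(\<Prod>p\<in>P. 1 + (\<Sum>k\<in>I. g p k)) = (\<Prod>p\<in>P. (\<Sum>k\<in>I. g p k) + 1)" by (simp add: add.commute)
  also have "\<dots> = (\<Sum>A\<in>Pow P. (\<Prod>p\<in>A. \<Sum>k\<in>I. g p k) * (\<Prod>p\<in>P - A. 1))"
    by (rule prod_add[OF P])
  also have "\<dots> = (\<Sum>A\<in>Pow P. \<Sum>h\<in>PiE A (\<lambda>_. I). \<Prod>p\<in>A. g p (h p))"
  proof (rule sum.cong[OF refl])
    fix A assume "A \<in> Pow P"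
    then have "finite A" using P by (auto intro: finite_subset)
    then show "(\<Prod>p\<in>A. \<Sum>k\<in>I. g p k) * (\<Prod>p\<in>P - A. 1) = (\<Sum>h\<in>PiE A (\<lambda>_. I). \<Prod>p\<in>A. g p (h p))"
      using I by (simp add: prod_sum_PiE)
  qed
  also have "\<dots> = (\<Sum>x\<in>S. G x)"
    unfolding S_def G_def using P I
    by (subst sum.Sigma) (auto intro: finite_subset finite_PiE simp: case_prod_beta)
  finally have R: "(\<Prod>p\<in>P. 1 + (\<Sum>k\<in>I. g p k)) = (\<Sum>x\<in>S. G x)" .
  have inj: "inj_on \<phi> F"
  proof
    fix d1 d2 assume d: "d1 \<in> F" "d2 \<in> F" "\<phi> d1 = \<phi> d2"
    then have pf: "prime_factors d1 = prime_factors d2" unfolding \<phi>_def by simp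
    have m: "multiplicity p d1 = multiplicity p d2" if "p \<in> prime_factors d1" for p
    proof -
      have eqr: "restrict (\<lambda>p. multiplicity p d1) (prime_factors d1) = restrict (\<lambda>p. multiplicity p d2) (prime_factors d2)"
        using arg_cong[OF d(3), of snd] unfolding \<phi>_def by (simp only: snd_conv)
      have "restrict (\<lambda>p. multiplicity p d1) (prime_factors d1) p = restrict (\<lambda>p. multiplicity p d2) (prime_factors d2) p"
        using eqr by (rule fun_cong)
      then show ?thesis using that pf by simp
    qed
    have "d1 > 0" "d2 > 0" using d F by (auto intro: Nat.gr0I)
    then have "d1 = (\<Prod>p\<in>prime_factors d1. p ^ multiplicity p d1)"
      "d2 = (\<Prod>p\<in>prime_factors d2. p ^ multiplicity p d2)"
      by (simp_all add: prime_factorization_nat[symmetric])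
    moreover have "(\<Prod>p\<in>prime_factors d1. p ^ multiplicity p d1) = (\<Prod>p\<in>prime_factors d2. p ^ multiplicity p d2)"
      unfolding pf[symmetric] by (intro prod.cong refl) (simp add: m)
    ultimately show "d1 = d2" by simp
  qed
  have img: "\<phi> ` F \<subseteq> S"
  proof
    fix x assume "x \<in> \<phi> ` F"
    then obtain d where d: "d \<in> F" "x = \<phi> d" by auto
    show "x \<in> S" unfolding S_def d(2) \<phi>_def using FP[OF d(1)] FI[OF d(1)] by auto
  qed
  have "(\<Sum>d\<in>F. \<Prod>p\<in>prime_factors d. g p (multiplicity p d)) = (\<Sum>d\<in>F. G (\<phi> d))"
    unfolding G_def \<phi>_def by (intro sum.cong refl prod.cong) auto
  also have "\<dots> = (\<Sum>x\<in>\<phi> ` F. G x)" using inj by (simp add: sum.reindex)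
  also have "\<dots> \<le> (\<Sum>x\<in>S. G x)"
    using img fS by (intro sum_mono2) (auto simp: G_def intro: prod_nonneg g)
  finally show ?thesis using R by simp
qed

lemma zeta_step:
  fixes u \<eta> :: real assumes "\<eta> > 0" "u \<ge> 2"
  shows "u powr (-(1+\<eta>)) \<le> ((u-1) powr (-\<eta>) - u powr (-\<eta>)) / \<eta>"
proof -
  define L1 where "L1 = ln u"
  define L0 where "L0 = ln (u - 1)"
  have u0: "u > 0" "u - 1 > 0" using assms by auto
  have "ln ((u-1)/u) \<le> (u-1)/u - 1" using u0 by (intro ln_le_minus_one) auto
  also have "\<dots> = - 1/u" using u0 by (simp add: field_simps)
  finally have d: "L1 - L0 \<ge> 1/u" unfolding L0_def L1_def using u0 by (simp add: ln_div)
  have e1: "1/u = exp (-L1)" unfolding L1_def using u0 by (simp add: exp_minus inverse_eq_divide)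
  have "exp (\<eta> * (L1 - L0)) - 1 \<ge> \<eta> * (L1 - L0)" using exp_ge_add_one_self[of "\<eta> * (L1 - L0)"] by linarith
  moreover have "\<eta> * (L1 - L0) \<ge> \<eta> * exp (-L1)" using d e1 assms by simp
  ultimately have k: "exp (\<eta> * (L1 - L0)) - 1 \<ge> \<eta> * exp (-L1)" by linarith
  have "\<eta> * exp (-(1+\<eta>) * L1) = exp (-\<eta> * L1) * (\<eta> * exp (-L1))"
    by (simp add: algebra_simps exp_add[symmetric])
  also have "\<dots> \<le> exp (-\<eta> * L1) * (exp (\<eta> * (L1 - L0)) - 1)"
    using k by (intro mult_left_mono) auto
  also have "\<dots> = exp (-\<eta> * L0) - exp (-\<eta> * L1)"
    by (simp add: algebra_simps exp_add[symmetric])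
  finally have "\<eta> * exp (-(1+\<eta>) * L1) \<le> exp (-\<eta> * L0) - exp (-\<eta> * L1)" .
  moreover have "u powr (-(1+\<eta>)) = exp (-(1+\<eta>) * L1)" "(u-1) powr (-\<eta>) = exp (-\<eta> * L0)"
    "u powr (-\<eta>) = exp (-\<eta> * L1)"
    unfolding L0_def L1_def powr_def using u0 by auto
  ultimately show ?thesis using assms by (simp add: field_simps)
qed

lemma zeta_partial:
  fixes \<eta> :: real assumes "\<eta> > 0"
  shows "(\<Sum>n\<in>{1..M}. real n powr (-(1+\<eta>))) \<le> 1 + 1/\<eta>"
proof (cases "M = 0")
  case True then show ?thesis using assms by simp
next
  case False
  have claim: "(\<Sum>n\<in>{1..M}. real n powr (-(1+\<eta>))) \<le> 1 + (1 - real M powr (-\<eta>))/\<eta>" if "M \<ge> 1" for M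
    using that
  proof (induction M rule: dec_induct)
    case base then show ?case by simp
  next
    case (step M)
    have "(\<Sum>n\<in>{1..Suc M}. real n powr (-(1+\<eta>))) = (\<Sum>n\<in>{1..M}. real n powr (-(1+\<eta>))) + real (Suc M) powr (-(1+\<eta>))"
      by simp
    also have "\<dots> \<le> 1 + (1 - real M powr (-\<eta>))/\<eta> + ((real (Suc M) - 1) powr (-\<eta>) - real (Suc M) powr (-\<eta>)) / \<eta>"
      using step.IH zeta_step[OF assms, of "real (Suc M)"] step.hyps by simp
    also have "\<dots> = 1 + (1 - real (Suc M) powr (-\<eta>))/\<eta>" using assms by (simp add: field_simps)
    finally show ?case .
  qed
  have "(\<Sum>n\<in>{1..M}. real n powr (-(1+\<eta>))) \<le> 1 + (1 - real M powr (-\<eta>))/\<eta>" using claim False by simp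
  also have "\<dots> \<le> 1 + 1/\<eta>" using assms by (simp add: divide_right_mono)
  finally show ?thesis .
qed

lemma prime_set_prod_inj:
  fixes P :: "nat set"
  assumes "finite P" "P \<subseteq> {p. prime p}"
  shows "inj_on (\<lambda>A. \<Prod>A) (Pow P)"
proof -
  have pf: "prime_factors (\<Prod>A) = A" if "A \<subseteq> P" for A :: "nat set"
  proof -
    have fA: "finite A" using that assms by (auto intro: finite_subset)
    have "0 \<notin> (\<lambda>x. x) ` A" using that assms by auto
    then have "prime_factors (\<Prod>A) = \<Union> ((prime_factors \<circ> (\<lambda>x. x)) ` A)"
      by (rule prime_factors_prod[OF fA])
    also have "(prime_factors \<circ> (\<lambda>x. x)) ` A = (\<lambda>x. {x}) ` A"
      by (intro image_cong refl) (use that assms in \<open>auto simp: prime_prime_factors\<close>)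
    also have "\<Union> ((\<lambda>x. {x}) ` A) = A" by auto
    finally show ?thesis .
  qed
  show ?thesis
  proof
    fix A B assume "A \<in> Pow P" "B \<in> Pow P" "\<Prod>A = \<Prod>B"
    then show "A = B" using pf by (metis PowD)
  qed
qed

lemma zeta_prod:
  fixes \<eta> :: real and P :: "nat set"
  assumes "finite P" "P \<subseteq> {p. prime p}" "\<eta> > 0"
  shows "(\<Prod>p\<in>P. 1 + real p powr (-(1+\<eta>))) \<le> 1 + 1/\<eta>"
proof -
  define s where "s = -(1+\<eta>)"
  have "(\<Prod>p\<in>P. 1 + real p powr s) = (\<Prod>p\<in>P. real p powr s + 1)" by (simp add: add.commute)
  also have "\<dots> = (\<Sum>A\<in>Pow P. (\<Prod>p\<in>A. real p powr s) * (\<Prod>p\<in>P - A. 1))"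
    by (rule prod_add[OF assms(1)])
  also have "\<dots> = (\<Sum>A\<in>Pow P. real (\<Prod>A) powr s)"
    by (intro sum.cong refl) (simp add: prod_powr_distrib)
  also have "\<dots> = (\<Sum>n\<in>(\<lambda>A. \<Prod>A) ` Pow P. real n powr s)"
    using prime_set_prod_inj[OF assms(1,2)] by (simp add: sum.reindex)
  also have "\<dots> \<le> (\<Sum>n\<in>{1..\<Prod>P}. real n powr s)"
  proof (rule sum_mono2)
    show "(\<lambda>A. \<Prod>A) ` Pow P \<subseteq> {1..\<Prod>P}"
    proof
      fix n assume "n \<in> (\<lambda>A. \<Prod>A) ` Pow P"
      then obtain A where A: "A \<subseteq> P" "n = \<Prod>A" by auto
      have pos: "\<And>p. p \<in> P \<Longrightarrow> p > 0" using assms(2) prime_gt_0_nat by auto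
      have "\<Prod>A dvd \<Prod>P" by (rule prod_dvd_prod_subset[OF assms(1) A(1)])
      moreover have "\<Prod>P > 0" using pos by (simp add: prod_pos)
      moreover have "\<Prod>A > 0" using pos A by (auto intro: prod_pos)
      ultimately show "n \<in> {1..\<Prod>P}" using A by (auto dest: dvd_imp_le)
    qed
  qed auto
  also have "\<dots> \<le> 1 + 1/\<eta>" unfolding s_def by (rule zeta_partial[OF assms(3)])
  finally show ?thesis unfolding s_def .
qed

lemma geom_tail:
  fixes x :: real assumes "0 \<le> x" "x < 1"
  shows "(\<Sum>k\<in>{a..K}. x^k) \<le> x^a / (1 - x)"
proof (cases "a \<le> K")
  case True
  have "(1 - x) * (\<Sum>k\<in>{a..K}. x^k) = x^a - x^Suc K" by (rule sum_gp_multiplied[OF True])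
  also have "\<dots> \<le> x^a" using assms by simp
  finally show ?thesis using assms by (simp add: field_simps mult.commute)
next
  case False then show ?thesis using assms by simp
qed

lemma inv_one_minus_exp:
  fixes y :: real assumes "y > 0"
  shows "1 / (1 - exp (-y)) \<le> 1 + 1/y"
proof -
  have e: "exp (-y) < 1" using assms by simp
  have "1 + y \<le> exp y" by (rule exp_ge_add_one_self)
  then have "(1 + y) * exp (-y) \<le> 1" by (simp add: exp_minus field_simps)
  then have "y \<le> (y + 1) * (1 - exp (-y))" by (simp add: algebra_simps)
  then have "1 \<le> (1 + 1/y) * (1 - exp (-y))" using assms by (simp add: field_simps)
  then show ?thesis using e by (simp add: divide_le_eq mult.commute)
qed

lemma local_bound:
  fixes \<eta> :: real and \<alpha> :: nat
  assumes p: "prime p" and \<alpha>: "\<alpha> \<ge> 1" and \<eta>: "\<eta> > 0"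
  shows "(\<Sum>k\<in>{\<alpha>..K}. (real p powr (-((1+\<eta>)/\<alpha>)))^k) \<le> real p powr (-(1+\<eta>)) * (1 + \<alpha> / ln p)"
proof -
  define x where "x = real p powr (-((1+\<eta>)/\<alpha>))"
  have p1: "real p > 1" using p prime_gt_1_nat by simp
  have lp: "ln (real p) > 0" using p1 by simp
  have x0: "0 \<le> x" unfolding x_def by simp
  have "x \<le> real p powr (-(1/\<alpha>))" unfolding x_def using p1 \<eta> \<alpha>
    by (intro powr_mono) (auto simp: divide_right_mono)
  also have "\<dots> = exp (- (ln p / \<alpha>))" using p1 by (simp add: powr_def)
  finally have xle: "x \<le> exp (- (ln p / \<alpha>))" .
  have e1: "exp (- (ln p / \<alpha>)) < 1" using lp \<alpha> by simp
  have x1: "x < 1" using xle e1 by linarith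
  have ex: "real \<alpha> * (-((1+\<eta>)/real \<alpha>)) = -(1+\<eta>)" using \<alpha> by (simp add: field_simps)
  have xa: "x^\<alpha> = real p powr (-(1+\<eta>))"
    unfolding x_def using p1 by (subst powr_power) (auto simp only: ex)
  have "(\<Sum>k\<in>{\<alpha>..K}. x^k) \<le> x^\<alpha> / (1 - x)" by (rule geom_tail[OF x0 x1])
  also have "\<dots> = real p powr (-(1+\<eta>)) * (1 / (1 - x))" unfolding xa by simp
  also have "\<dots> \<le> real p powr (-(1+\<eta>)) * (1 / (1 - exp (- (ln p / \<alpha>))))"
  proof -
    have h1: "0 < 1 - x" "0 < 1 - exp (- (ln p / \<alpha>))" using x1 e1 by linarith+
    have q: "1/(1-x) \<le> 1/(1 - exp (- (ln p / \<alpha>)))"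
      by (rule divide_left_mono[OF _ _ mult_pos_pos[OF h1(1) h1(2)]]) (use xle in auto)
    show ?thesis by (rule mult_left_mono[OF q]) simp
  qed
  also have "\<dots> \<le> real p powr (-(1+\<eta>)) * (1 + \<alpha> / ln p)"
    using inv_one_minus_exp[of "ln p / \<alpha>"] lp \<alpha> by (intro mult_left_mono) auto
  finally show ?thesis unfolding x_def .
qed

lemma factor_ineq1:
  fixes a b c :: real assumes "0 \<le> a" "0 \<le> c" "0 \<le> b" "a * c \<le> b"
  shows "1 + a * (1 + c) \<le> (1 + a) * (1 + b)"
  using assms by (simp add: algebra_simps) (meson add_increasing2 mult_nonneg_nonneg order_trans)

lemma factor_ineq2:
  fixes a b c q m :: real
  assumes "0 \<le> a" "0 \<le> c" "0 \<le> b" "0 \<le> m" "1 \<le> q" "q * a * c \<le> b * (1 + q * a)" "q * a \<le> a + m + a * m"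
  shows "1 + q * a * (1 + c) \<le> (1 + a) * (1 + m) * (1 + b)"
proof -
  have "1 + q * a * (1 + c) \<le> (1 + q * a) * (1 + b)" using assms by (simp add: algebra_simps)
  also have "\<dots> \<le> (1 + a) * (1 + m) * (1 + b)"
    using assms by (intro mult_right_mono) (auto simp: algebra_simps)
  finally show ?thesis .
qed

lemma sum_recip_pp1:
  fixes P :: "nat set"
  assumes "finite P" "P \<subseteq> {p. prime p}"
  shows "(\<Sum>p\<in>P. 1 / (real p * (real p - 1))) \<le> 1"
proof -
  define N where "N = Max (insert 2 P)"
  have PN: "P \<subseteq> {2..N}"
  proof
    fix x assume x: "x \<in> P"
    then have "prime x" using assms(2) by auto
    then have "2 \<le> x" by (rule prime_ge_2_nat)
    moreover have "x \<le> N" unfolding N_def using x assms(1) by simp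
    ultimately show "x \<in> {2..N}" by simp
  qed
  have tel: "(\<Sum>n\<in>{2..M}. 1 / (real n * (real n - 1))) = 1 - 1 / real M" if "M \<ge> 2" for M
    using that
  proof (induction M rule: dec_induct)
    case base then show ?case by simp
  next
    case (step M)
    have "(\<Sum>n\<in>{2..Suc M}. 1 / (real n * (real n - 1))) = (1 - 1 / real M) + 1 / (real (Suc M) * real M)"
      using step by (simp add: atLeastAtMostSuc_conv)
    also have "\<dots> = 1 - 1 / real (Suc M)"
    proof -
      have aux: "m > 0 \<Longrightarrow> (1 - 1 / m) + 1 / ((1 + m) * m) = 1 - 1 / (1 + m)" for m :: real
      proof -
        assume m: "m > 0"
        have "m + m * m > 0" using m by (intro add_pos_pos mult_pos_pos)
        then have "m + m * m \<noteq> 0" "1 + m \<noteq> 0" "m \<noteq> 0" using m by auto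
        then show ?thesis by (simp add: field_simps)
      qed
      show ?thesis using aux[of "real M"] step.hyps by simp
    qed
    finally show ?case .
  qed
  have N2: "N \<ge> 2" unfolding N_def using assms by simp
  have "(\<Sum>p\<in>P. 1 / (real p * (real p - 1))) \<le> (\<Sum>n\<in>{2..N}. 1 / (real n * (real n - 1)))"
    using PN by (intro sum_mono2) auto
  also have "\<dots> = 1 - 1 / real N" using tel N2 by simp
  also have "\<dots> \<le> 1" by simp
  finally show ?thesis .
qed

lemma powr_pow_swap: "x > 0 \<Longrightarrow> ((x::real) ^ m) powr s = (x powr s) ^ m"
  by (simp add: powr_power powr_realpow[symmetric] powr_powr mult.commute)

lemma weight_eq:
  assumes "d > 0"
  shows "real d powr s = (\<Prod>p\<in>prime_factors d. (real p powr s) ^ multiplicity p d)"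
proof -
  have "real d = real (\<Prod>p\<in>prime_factors d. p ^ multiplicity p d)"
    using prime_factorization_nat[OF assms] by simp
  also have "\<dots> = (\<Prod>p\<in>prime_factors d. real p ^ multiplicity p d)" by simp
  finally have "real d powr s = (\<Prod>p\<in>prime_factors d. real p ^ multiplicity p d) powr s" by simp
  also have "\<dots> = (\<Prod>p\<in>prime_factors d. (real p ^ multiplicity p d) powr s)" by (rule prod_powr_distrib)
  also have "\<dots> = (\<Prod>p\<in>prime_factors d. (real p powr s) ^ multiplicity p d)"
    by (intro prod.cong refl powr_pow_swap) (auto dest: in_prime_factors_imp_prime prime_gt_0_nat)
  finally show ?thesis .
qed

lemma rankin_pt:
  fixes Y t r :: real
  assumes "Y > 0" "Y \<le> real d" "0 \<le> t" "t + r = 1"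
  shows "1 / real d \<le> Y powr (-t) * real d powr (-r)"
proof -
  have d: "real d > 0" using assms by simp
  have "1 / real d = real d powr (-1)" using d by (simp add: powr_minus_divide)
  also have "\<dots> = real d powr (-t + -r)"
  proof -
    have e: "-t + -r = (-1::real)" using assms(4) by linarith
    show ?thesis by (simp only: e)
  qed
  also have "\<dots> = real d powr (-t) * real d powr (-r)" by (rule powr_add)
  also have "\<dots> \<le> Y powr (-t) * real d powr (-r)"
    using assms d by (intro mult_right_mono powr_mono2') auto
  finally show ?thesis .
qed

lemma totient_inv:
  assumes "d > 0"
  shows "1 / real (totient d) = (1 / real d) * (\<Prod>p\<in>prime_factors d. real p / (real p - 1))"
proof -
  have pr: "real p > 1" if "p \<in> prime_factors d" for p
  proof -
    have "prime p" using that by (rule in_prime_factors_imp_prime)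
    then show ?thesis using prime_gt_1_nat by simp
  qed
  have "(\<Prod>p\<in>prime_factors d. real p / (real p - 1)) = inverse (\<Prod>p\<in>prime_factors d. 1 - 1 / real p)"
  proof -
    have "(\<Prod>p\<in>prime_factors d. real p / (real p - 1)) = (\<Prod>p\<in>prime_factors d. inverse (1 - 1 / real p))"
    proof (intro prod.cong refl)
      fix p assume "p \<in> prime_factors d"
      then have "real p > 1" by (rule pr)
      then have "real p - 1 \<noteq> 0" "real p \<noteq> 0" by auto
      then show "real p / (real p - 1) = inverse (1 - 1 / real p)" by (simp add: field_simps)
    qed
    also have "\<dots> = prod (inverse \<circ> (\<lambda>p. 1 - 1 / real p)) (prime_factors d)" by (simp add: o_def)
    also have "\<dots> = inverse (\<Prod>p\<in>prime_factors d. 1 - 1 / real p)" by (rule prod_inversef)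
    finally show ?thesis .
  qed
  then show ?thesis by (simp add: totient_formula2 field_simps)
qed

lemma alpha_full_mult:
  assumes "alpha_full \<alpha> d" "d > 0" "p \<in> prime_factors d"
  shows "\<alpha> \<le> multiplicity p d" "multiplicity p d \<le> d"
proof -
  have p: "prime p" "p dvd d" using assms(3) by (auto dest: in_prime_factors_imp_prime simp: in_prime_factors_iff)
  then have "p ^ \<alpha> dvd d" using assms(1) unfolding alpha_full_def by blast
  then show "\<alpha> \<le> multiplicity p d" using assms(2) p
    by (subst (asm) power_dvd_iff_le_multiplicity) auto
  have "p ^ multiplicity p d \<le> d" using multiplicity_dvd[of p d] assms(2) by (intro dvd_imp_le) auto
  moreover have "multiplicity p d < 2 ^ multiplicity p d" by (rule less_exp)
  moreover have "2 ^ multiplicity p d \<le> p ^ multiplicity p d" using prime_ge_2_nat[OF p(1)]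
    by (intro power_mono) auto
  ultimately show "multiplicity p d \<le> d" by linarith
qed

lemma generic_bound:
  fixes Y \<eta> r t :: real and \<alpha> :: nat and q :: "nat \<Rightarrow> real" and F :: "nat set"
  assumes Y: "Y > 0" and \<alpha>: "\<alpha> \<ge> 1" and \<eta>: "\<eta> > 0" and r: "r = (1+\<eta>)/\<alpha>" and t: "t = 1 - r" "0 \<le> t"
    and F: "finite F" "F \<subseteq> {d. Y \<le> real d \<and> alpha_full \<alpha> d}" and q: "\<And>p. q p \<ge> 0"
  shows "(\<Sum>d\<in>F. (1 / real d) * (\<Prod>p\<in>prime_factors d. q p))
     \<le> Y powr (-t) * (\<Prod>p\<in>{p. prime p \<and> p \<le> Max (insert 0 F)}. 1 + q p * (real p powr (-(1+\<eta>)) * (1 + \<alpha> / ln p)))"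
proof -
  define K where "K = Max (insert 0 F)"
  define P where "P = {p. prime p \<and> p \<le> K}"
  define g where "g p k = (real p powr (-r)) ^ k * q p" for p k
  have dpos: "\<And>d. d \<in> F \<Longrightarrow> d > 0" using F Y by (auto intro!: Nat.gr0I)
  have dK: "\<And>d. d \<in> F \<Longrightarrow> d \<le> K" unfolding K_def using F by simp
  have "(\<Sum>d\<in>F. (1 / real d) * (\<Prod>p\<in>prime_factors d. q p))
      \<le> (\<Sum>d\<in>F. Y powr (-t) * (\<Prod>p\<in>prime_factors d. g p (multiplicity p d)))"
  proof (rule sum_mono)
    fix d assume d: "d \<in> F"
    have "1 / real d \<le> Y powr (-t) * real d powr (-r)"
      using d F Y t by (intro rankin_pt) auto
    also have "real d powr (-r) = (\<Prod>p\<in>prime_factors d. (real p powr (-r)) ^ multiplicity p d)"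
      by (rule weight_eq[OF dpos[OF d]])
    finally have "(1 / real d) * (\<Prod>p\<in>prime_factors d. q p) \<le> Y powr (-t) * (\<Prod>p\<in>prime_factors d. (real p powr (-r)) ^ multiplicity p d) * (\<Prod>p\<in>prime_factors d. q p)"
      using q by (intro mult_right_mono prod_nonneg) auto
    also have "\<dots> = Y powr (-t) * (\<Prod>p\<in>prime_factors d. g p (multiplicity p d))"
      unfolding g_def by (simp add: prod.distrib)
    finally show "(1 / real d) * (\<Prod>p\<in>prime_factors d. q p) \<le> Y powr (-t) * (\<Prod>p\<in>prime_factors d. g p (multiplicity p d))" .
  qed
  also have "\<dots> = Y powr (-t) * (\<Sum>d\<in>F. \<Prod>p\<in>prime_factors d. g p (multiplicity p d))"
    by (simp add: sum_distrib_left)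
  also have "\<dots> \<le> Y powr (-t) * (\<Prod>p\<in>P. 1 + (\<Sum>k\<in>{\<alpha>..K}. g p k))"
  proof (intro mult_left_mono euler_bound)
    show "finite F" using F by simp
    show "0 \<notin> F" using dpos by auto
    show "finite P" unfolding P_def by simp
    show "prime_factors d \<subseteq> P" if "d \<in> F" for d
    proof
      fix p assume p: "p \<in> prime_factors d"
      then have "prime p" "p dvd d" by (auto dest: in_prime_factors_imp_prime simp: in_prime_factors_iff)
      then have "p \<le> d" using dpos[OF that] by (auto intro: dvd_imp_le)
      then show "p \<in> P" unfolding P_def using dK[OF that] \<open>prime p\<close> by simp
    qed
    show "multiplicity p d \<in> {\<alpha>..K}" if "d \<in> F" "p \<in> prime_factors d" for d p
      using alpha_full_mult[of \<alpha> d p] that F dpos dK by fastforce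
    show "0 \<le> g p k" for p k unfolding g_def using q by simp
  qed auto
  also have "\<dots> \<le> Y powr (-t) * (\<Prod>p\<in>P. 1 + q p * (real p powr (-(1+\<eta>)) * (1 + \<alpha> / ln p)))"
  proof (intro mult_left_mono prod_mono conjI)
    fix p assume p: "p \<in> P"
    then have pp: "prime p" unfolding P_def by simp
    show "0 \<le> 1 + (\<Sum>k\<in>{\<alpha>..K}. g p k)" unfolding g_def using q by (intro add_nonneg_nonneg sum_nonneg) auto
    have "(\<Sum>k\<in>{\<alpha>..K}. g p k) = q p * (\<Sum>k\<in>{\<alpha>..K}. (real p powr (-((1+\<eta>)/\<alpha>))) ^ k)"
      unfolding g_def r by (simp add: sum_distrib_left mult.commute)
    also have "\<dots> \<le> q p * (real p powr (-(1+\<eta>)) * (1 + \<alpha> / ln p))"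
      using local_bound[OF pp \<alpha> \<eta>] q by (intro mult_left_mono) auto
    finally show "1 + (\<Sum>k\<in>{\<alpha>..K}. g p k) \<le> 1 + q p * (real p powr (-(1+\<eta>)) * (1 + \<alpha> / ln p))" by simp
  qed auto
  finally show ?thesis unfolding P_def K_def .
qed

lemma exp_half_le_2: "exp (1/2::real) \<le> 2"
proof -
  have "exp (1/2::real) ^ 2 = exp 1" by (simp add: exp_of_nat_mult[symmetric])
  also have "\<dots> \<le> 2^2" using e_less_272 by simp
  finally show ?thesis by (rule power2_le_imp_le) simp
qed

lemma a_le: assumes "prime p" "\<eta> \<ge> 0" shows "real p powr (-(1+\<eta>)) \<le> 1 / real p"
proof -
  have p1: "real p \<ge> 1" using assms prime_gt_1_nat by (simp add: less_imp_le)
  have "real p powr (-(1+\<eta>)) \<le> real p powr (-1)" using p1 assms by (intro powr_mono) auto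
  also have "\<dots> = 1 / real p" using p1 by (simp add: powr_minus_divide)
  finally show ?thesis .
qed

lemma b_ineq1:
  fixes \<alpha> :: nat
  assumes "prime p" "\<eta> \<ge> 0"
  shows "1 + 1 * (real p powr (-(1+\<eta>)) * (1 + \<alpha> / ln p)) \<le> (1 + real p powr (-(1+\<eta>))) * (1 + \<alpha> * (1 / (real p * ln p)))"
proof -
  have p1: "real p > 1" using assms prime_gt_1_nat by simp
  have lp: "ln (real p) > 0" using p1 by simp
  have a: "real p powr (-(1+\<eta>)) \<le> 1 / real p" by (rule a_le[OF assms])
  have "real p powr (-(1+\<eta>)) * (\<alpha> / ln p) \<le> (1 / real p) * (\<alpha> / ln p)"
    using a lp by (intro mult_right_mono) auto
  also have "\<dots> = \<alpha> * (1 / (real p * ln p))" by simp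
  finally have le: "real p powr (-(1+\<eta>)) * (\<alpha> / ln p) \<le> \<alpha> * (1 / (real p * ln p))" .
  have "1 + real p powr (-(1+\<eta>)) * (1 + \<alpha> / ln p) \<le> (1 + real p powr (-(1+\<eta>))) * (1 + \<alpha> * (1 / (real p * ln p)))"
    by (rule factor_ineq1[where a="real p powr (-(1+\<eta>))" and c="\<alpha> / ln p" and b="\<alpha> * (1 / (real p * ln p))"])
       (use le lp p1 in auto)
  then show ?thesis by simp
qed

lemma b_ineq2:
  fixes \<alpha> :: nat
  assumes "prime p" "\<eta> \<ge> 0"
  shows "1 + real p / (real p - 1) * (real p powr (-(1+\<eta>)) * (1 + \<alpha> / ln p))
    \<le> (1 + real p powr (-(1+\<eta>))) * (1 + 1 / (real p * (real p - 1))) * (1 + \<alpha> * (1 / (real p * ln p)))"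
proof -
  define a where "a = real p powr (-(1+\<eta>))"
  define q where "q = real p / (real p - 1)"
  define c where "c = \<alpha> / ln p"
  define m where "m = 1 / (real p * (real p - 1))"
  have p1: "real p > 1" using assms prime_gt_1_nat by simp
  have lp: "ln (real p) > 0" using p1 by simp
  have a1: "a \<le> 1 / real p" unfolding a_def by (rule a_le[OF assms])
  have a0: "0 \<le> a" unfolding a_def by simp
  have pa: "real p * a \<le> 1" using a1 p1 by (simp add: field_simps)
  have qa: "q * a = a + a / (real p - 1)" unfolding q_def using p1 by (simp add: field_simps)
  have qap: "q * a / real p = a / (real p - 1)" unfolding q_def using p1 by (simp add: field_simps)
  have "a / (real p - 1) \<le> (1 / real p) / (real p - 1)" using a1 p1 by (intro divide_right_mono) auto
  then have am: "a / (real p - 1) \<le> m" unfolding m_def by simp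
  have i1: "q * a * c \<le> c / real p * (1 + q * a)"
  proof -
    have "q * a \<le> 1 / real p + a / (real p - 1)" using qa a1 by simp
    also have "\<dots> = (1 + q * a) / real p" using qap by (simp add: add_divide_distrib)
    finally have "q * a \<le> (1 + q * a) / real p" .
    then have "c * (q * a) \<le> c * ((1 + q * a) / real p)" using lp unfolding c_def
      by (intro mult_left_mono) auto
    then show ?thesis by (simp add: mult.commute mult.left_commute)
  qed
  have "0 \<le> a * m" unfolding m_def using a0 p1 by simp
  then have i2: "q * a \<le> a + m + a * m" using qa am by linarith
  have "1 + q * a * (1 + c) \<le> (1 + a) * (1 + m) * (1 + c / real p)"
    by (rule factor_ineq2) (use a0 lp p1 i1 i2 in \<open>auto simp: c_def m_def q_def\<close>)
  moreover have "c / real p = \<alpha> * (1 / (real p * ln p))" unfolding c_def by simp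
  ultimately show ?thesis unfolding a_def q_def c_def m_def by (simp add: ac_simps)
qed

theorem lemma4:
  shows "kappa \<le> 5.5 \<and>
    (\<forall>(Y::real) (\<alpha>::nat). Y \<ge> 20 \<and> \<alpha> \<ge> 2 \<longrightarrow>
      (let D = {d::nat. real d \<ge> Y \<and> alpha_full \<alpha> d} in
        (\<lambda>d. 1 / real d) summable_on D \<and>
        (\<Sum>\<^sub>\<infinity>d\<in>D. 1 / real d) \<le> 3 * kappa ^ \<alpha> * ln Y / Y powr (1 - 1 / real \<alpha>) \<and>
        (\<lambda>d. 1 / real (totient d)) summable_on D \<and>
        (\<Sum>\<^sub>\<infinity>d\<in>D. 1 / real (totient d))
          \<le> 13 * kappa ^ \<alpha> * ln Y * ln (ln Y) / Y powr (1 - 1 / real \<alpha>)))"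
proof -
  have part2: "(let D = {d::nat. real d \<ge> Y \<and> alpha_full \<alpha> d} in
        (\<lambda>d. 1 / real d) summable_on D \<and>
        (\<Sum>\<^sub>\<infinity>d\<in>D. 1 / real d) \<le> 3 * kappa ^ \<alpha> * ln Y / Y powr (1 - 1 / real \<alpha>) \<and>
        (\<lambda>d. 1 / real (totient d)) summable_on D \<and>
        (\<Sum>\<^sub>\<infinity>d\<in>D. 1 / real (totient d))
          \<le> 13 * kappa ^ \<alpha> * ln Y * ln (ln Y) / Y powr (1 - 1 / real \<alpha>))"
    if Y: "Y \<ge> 20" and \<alpha>: "\<alpha> \<ge> 2" for Y :: real and \<alpha> :: nat
  proof -
    define D where "D = {d::nat. real d \<ge> Y \<and> alpha_full \<alpha> d}"
    define L where "L = ln Y"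
    have "ln (20::real) \<le> ln Y" using Y by simp
    then have L3: "L \<ge> 2.99" unfolding L_def using lo_20 by simp
    define \<eta> where "\<eta> = 1 / L"
    have \<eta>0: "\<eta> > 0" "\<eta> \<le> 1" unfolding \<eta>_def using L3 by auto
    have \<eta>L: "\<eta> * L = 1" unfolding \<eta>_def using L3 by simp
    define r where "r = (1 + \<eta>) / real \<alpha>"
    define t where "t = 1 - r"
    have t0: "0 \<le> t" unfolding t_def r_def using \<eta>0 \<alpha> by (simp add: field_simps)
    define W where "W = Y powr (1 - 1 / real \<alpha>)"
    have W0: "W > 0" unfolding W_def using Y by simp
    define \<Sigma> where "\<Sigma> = (\<Sum>\<^sub>\<infinity>p\<in>{p::nat. prime p}. 1 / (real p * ln (real p)))"
    have k: "kappa = exp \<Sigma>" unfolding kappa_def \<Sigma>_def ..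
    have kpos: "0 \<le> kappa ^ \<alpha>" unfolding k by simp
    have Ypow: "Y powr (-t) \<le> 2 * (1 / W)"
    proof -
      have "-t = -(1 - 1 / real \<alpha>) + \<eta> / real \<alpha>" unfolding t_def r_def using \<alpha> by (simp add: field_simps)
      then have e0: "Y powr (-t) = Y powr (-(1 - 1 / real \<alpha>)) * Y powr (\<eta> / real \<alpha>)" by (simp add: powr_add)
      have e1: "Y powr (\<eta> / real \<alpha>) = exp (1 / real \<alpha>)"
        using Y \<eta>L unfolding L_def by (simp add: powr_def field_simps)
      have e2: "Y powr (-(1 - 1 / real \<alpha>)) = 1 / W" unfolding W_def by (rule powr_minus_divide)
      have "exp (1 / real \<alpha>) \<le> exp (1/2)" using \<alpha> by (simp add: field_simps)
      also have "\<dots> \<le> 2" by (rule exp_half_le_2)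
      finally have "exp (1 / real \<alpha>) \<le> 2" .
      then have "(1 / W) * exp (1 / real \<alpha>) \<le> (1 / W) * 2" using W0 by (intro mult_left_mono) auto
      then show ?thesis unfolding e0 e1 e2 by (simp add: mult.commute)
    qed
    have kb: "(\<Prod>p\<in>P. 1 + real \<alpha> * (1 / (real p * ln (real p)))) \<le> kappa ^ \<alpha>"
      if "finite P" "P \<subseteq> {p. prime p}" for P
    proof -
      have nn: "0 \<le> real \<alpha> * (1 / (real p * ln (real p)))" if "p \<in> P" for p
      proof -
        have "prime p" using that \<open>P \<subseteq> {p. prime p}\<close> by auto
        then have "real p > 1" using prime_gt_1_nat by simp
        then show ?thesis by simp
      qed
      have "(\<Prod>p\<in>P. 1 + real \<alpha> * (1 / (real p * ln (real p)))) \<le> exp (\<Sum>p\<in>P. real \<alpha> * (1 / (real p * ln (real p))))"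
        by (rule prod_le_exp_sum) (rule nn)
      also have "(\<Sum>p\<in>P. real \<alpha> * (1 / (real p * ln (real p)))) = real \<alpha> * (\<Sum>p\<in>P. 1 / (real p * ln (real p)))"
        by (simp add: sum_distrib_left)
      also have "(\<Sum>p\<in>P. 1 / (real p * ln (real p))) \<le> \<Sigma>"
        unfolding \<Sigma>_def using that
        by (intro finite_sum_le_infsum primes_summable) (auto dest: prime_gt_1_nat)
      then have "real \<alpha> * (\<Sum>p\<in>P. 1 / (real p * ln (real p))) \<le> real \<alpha> * \<Sigma>"
        by (rule mult_left_mono) simp
      then have "exp (real \<alpha> * (\<Sum>p\<in>P. 1 / (real p * ln (real p)))) \<le> exp (real \<alpha> * \<Sigma>)" by simp
      also have "\<dots> = kappa ^ \<alpha>" unfolding k by (rule exp_of_nat_mult)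
      finally show ?thesis .
    qed
    have zp: "(\<Prod>p\<in>P. 1 + real p powr (-(1+\<eta>))) \<le> 1 + L" if "finite P" "P \<subseteq> {p. prime p}" for P
      using zeta_prod[OF that \<eta>0(1)] unfolding \<eta>_def using L3 by simp
    have FD: "finite F \<Longrightarrow> F \<subseteq> D \<Longrightarrow> F \<subseteq> {d. Y \<le> real d \<and> alpha_full \<alpha> d}" for F
      unfolding D_def by auto
    have B1: "(\<Sum>d\<in>F. 1 / real d) \<le> 2 * (1 + L) * kappa ^ \<alpha> / W" if F: "finite F" "F \<subseteq> D" for F
    proof -
      define P where "P = {p. prime p \<and> p \<le> Max (insert 0 F)}"
      have fP: "finite P" "P \<subseteq> {p. prime p}" unfolding P_def by auto
      have "(\<Sum>d\<in>F. 1 / real d) = (\<Sum>d\<in>F. (1 / real d) * (\<Prod>p\<in>prime_factors d. (\<lambda>_. 1::real) p))" by simp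
      also have "\<dots> \<le> Y powr (-t) * (\<Prod>p\<in>P. 1 + (\<lambda>_. 1::real) p * (real p powr (-(1+\<eta>)) * (1 + \<alpha> / ln p)))"
        unfolding P_def
        by (rule generic_bound[OF _ _ \<eta>0(1) r_def t_def t0 F(1) FD[OF F]]) (use Y \<alpha> in auto)
      also have "\<dots> \<le> Y powr (-t) * (\<Prod>p\<in>P. (1 + real p powr (-(1+\<eta>))) * (1 + real \<alpha> * (1 / (real p * ln (real p)))))"
      proof (intro mult_left_mono prod_mono conjI)
        fix p assume "p \<in> P"
        then have pp: "prime p" unfolding P_def by simp
        show "1 + (\<lambda>_. 1::real) p * (real p powr (-(1+\<eta>)) * (1 + \<alpha> / ln p)) \<le> (1 + real p powr (-(1+\<eta>))) * (1 + real \<alpha> * (1 / (real p * ln (real p))))"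
          using b_ineq1[OF pp, of \<eta> \<alpha>] \<eta>0 by simp
        show "0 \<le> 1 + (\<lambda>_. 1::real) p * (real p powr (-(1+\<eta>)) * (1 + \<alpha> / ln p))"
          using pp by (auto dest: prime_gt_1_nat intro!: add_nonneg_nonneg mult_nonneg_nonneg)
      qed simp
      also have "\<dots> = Y powr (-t) * ((\<Prod>p\<in>P. 1 + real p powr (-(1+\<eta>))) * (\<Prod>p\<in>P. 1 + real \<alpha> * (1 / (real p * ln (real p)))))"
        by (simp add: prod.distrib)
      also have "\<dots> \<le> (2 * (1 / W)) * ((1 + L) * kappa ^ \<alpha>)"
        using Ypow zp[OF fP] kb[OF fP] L3 W0
        by (intro mult_mono) (auto intro!: prod_nonneg add_nonneg_nonneg mult_nonneg_nonneg dest: prime_gt_1_nat simp: P_def)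
      also have "\<dots> = 2 * (1 + L) * kappa ^ \<alpha> / W" by simp
      finally show ?thesis .
    qed
    have B2: "(\<Sum>d\<in>F. 1 / real (totient d)) \<le> 2 * (1 + L) * exp 1 * kappa ^ \<alpha> / W" if F: "finite F" "F \<subseteq> D" for F
    proof -
      define P where "P = {p. prime p \<and> p \<le> Max (insert 0 F)}"
      have fP: "finite P" "P \<subseteq> {p. prime p}" unfolding P_def by auto
      define q where "q p = real p / (real p - 1)" for p :: nat
      have q0: "0 \<le> q p" for p unfolding q_def by (cases p) auto
      have dpos: "d > 0" if "d \<in> F" for d using that F Y unfolding D_def by (auto intro!: Nat.gr0I)
      have "(\<Sum>d\<in>F. 1 / real (totient d)) = (\<Sum>d\<in>F. (1 / real d) * (\<Prod>p\<in>prime_factors d. q p))"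
        unfolding q_def by (intro sum.cong refl totient_inv dpos)
      also have "\<dots> \<le> Y powr (-t) * (\<Prod>p\<in>P. 1 + q p * (real p powr (-(1+\<eta>)) * (1 + \<alpha> / ln p)))"
        unfolding P_def
        by (rule generic_bound[OF _ _ \<eta>0(1) r_def t_def t0 F(1) FD[OF F] q0]) (use Y \<alpha> in auto)
      also have "\<dots> \<le> Y powr (-t) * (\<Prod>p\<in>P. (1 + real p powr (-(1+\<eta>))) * (1 + 1 / (real p * (real p - 1))) * (1 + real \<alpha> * (1 / (real p * ln (real p)))))"
      proof (intro mult_left_mono prod_mono conjI)
        fix p assume "p \<in> P"
        then have pp: "prime p" unfolding P_def by simp
        show "1 + q p * (real p powr (-(1+\<eta>)) * (1 + \<alpha> / ln p)) \<le> (1 + real p powr (-(1+\<eta>))) * (1 + 1 / (real p * (real p - 1))) * (1 + real \<alpha> * (1 / (real p * ln (real p))))"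
          using b_ineq2[OF pp, of \<eta> \<alpha>] \<eta>0 unfolding q_def by simp
        show "0 \<le> 1 + q p * (real p powr (-(1+\<eta>)) * (1 + \<alpha> / ln p))"
          using pp q0[of p] by (auto dest: prime_gt_1_nat intro!: add_nonneg_nonneg mult_nonneg_nonneg)
      qed simp
      also have "\<dots> = Y powr (-t) * ((\<Prod>p\<in>P. 1 + real p powr (-(1+\<eta>))) * (\<Prod>p\<in>P. 1 + 1 / (real p * (real p - 1))) * (\<Prod>p\<in>P. 1 + real \<alpha> * (1 / (real p * ln (real p)))))"
        by (simp add: prod.distrib)
      also have "\<dots> \<le> (2 * (1 / W)) * ((1 + L) * exp 1 * kappa ^ \<alpha>)"
      proof -
        have m0: "\<And>p. p \<in> P \<Longrightarrow> 0 \<le> 1 / (real p * (real p - 1))"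
          unfolding P_def by (auto dest: prime_gt_1_nat)
        have "(\<Prod>p\<in>P. 1 + 1 / (real p * (real p - 1))) \<le> exp (\<Sum>p\<in>P. 1 / (real p * (real p - 1)))"
          by (rule prod_le_exp_sum) (rule m0)
        also have "\<dots> \<le> exp 1" using sum_recip_pp1[OF fP] by simp
        finally have me: "(\<Prod>p\<in>P. 1 + 1 / (real p * (real p - 1))) \<le> exp 1" .
        have nn1: "0 \<le> (\<Prod>p\<in>P. 1 + real p powr (-(1+\<eta>)))" by (intro prod_nonneg) auto
        have nn2: "0 \<le> (\<Prod>p\<in>P. 1 + 1 / (real p * (real p - 1)))" using m0 by (intro prod_nonneg) auto
        have nn3: "0 \<le> (\<Prod>p\<in>P. 1 + real \<alpha> * (1 / (real p * ln (real p))))"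
          unfolding P_def by (intro prod_nonneg) (auto dest: prime_gt_1_nat)
        have "(\<Prod>p\<in>P. 1 + real p powr (-(1+\<eta>))) * (\<Prod>p\<in>P. 1 + 1 / (real p * (real p - 1))) \<le> (1 + L) * exp 1"
          using zp[OF fP] me nn1 nn2 L3 by (intro mult_mono) auto
        then have "(\<Prod>p\<in>P. 1 + real p powr (-(1+\<eta>))) * (\<Prod>p\<in>P. 1 + 1 / (real p * (real p - 1))) * (\<Prod>p\<in>P. 1 + real \<alpha> * (1 / (real p * ln (real p)))) \<le> (1 + L) * exp 1 * kappa ^ \<alpha>"
          by (rule mult_mono) (use kb[OF fP] nn1 nn2 nn3 L3 in auto)
        then have ABC: "(\<Prod>p\<in>P. 1 + real p powr (-(1+\<eta>))) * (\<Prod>p\<in>P. 1 + 1 / (real p * (real p - 1))) * (\<Prod>p\<in>P. 1 + real \<alpha> * (1 / (real p * ln (real p)))) \<le> (1 + L) * exp 1 * kappa ^ \<alpha>" .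
        have c0: "0 \<le> (\<Prod>p\<in>P. 1 + real p powr (-(1+\<eta>))) * (\<Prod>p\<in>P. 1 + 1 / (real p * (real p - 1))) * (\<Prod>p\<in>P. 1 + real \<alpha> * (1 / (real p * ln (real p))))"
          using nn1 nn2 nn3 by (intro mult_nonneg_nonneg)
        have b0: "0 \<le> 2 * (1 / W)" using W0 by simp
        show ?thesis by (rule mult_mono[OF Ypow ABC b0 c0])
      qed
      also have "\<dots> = 2 * (1 + L) * exp 1 * kappa ^ \<alpha> / W" by simp
      finally show ?thesis .
    qed
    have nn1: "\<And>d. d \<in> D \<Longrightarrow> 0 \<le> 1 / real d" by simp
    have nn2: "\<And>d. d \<in> D \<Longrightarrow> 0 \<le> 1 / real (totient d)" by simp
    have S1: "(\<lambda>d. 1 / real d) summable_on D"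
      by (rule nonneg_bdd_above_summable_on[OF nn1]) (use B1 in \<open>auto simp: bdd_above_def\<close>)
    have S2: "(\<lambda>d. 1 / real (totient d)) summable_on D"
      by (rule nonneg_bdd_above_summable_on[OF nn2]) (use B2 in \<open>auto simp: bdd_above_def\<close>)
    have I1: "(\<Sum>\<^sub>\<infinity>d\<in>D. 1 / real d) \<le> 2 * (1 + L) * kappa ^ \<alpha> / W"
      by (rule infsum_le_finite_sums[OF S1]) (rule B1)
    have I2: "(\<Sum>\<^sub>\<infinity>d\<in>D. 1 / real (totient d)) \<le> 2 * (1 + L) * exp 1 * kappa ^ \<alpha> / W"
      by (rule infsum_le_finite_sums[OF S2]) (rule B2)
    have C1: "2 * (1 + L) * kappa ^ \<alpha> / W \<le> 3 * kappa ^ \<alpha> * L / W"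
    proof -
      have "2 * (1 + L) \<le> 3 * L" using L3 by simp
      then have h: "2 * (1 + L) * kappa ^ \<alpha> \<le> 3 * L * kappa ^ \<alpha>" using kpos by (rule mult_right_mono)
      have e: "3 * L * kappa ^ \<alpha> = 3 * kappa ^ \<alpha> * L" by (simp only: mult.commute mult.left_commute)
      show ?thesis using divide_right_mono[OF h, of W] W0 unfolding e by simp
    qed
    have C2: "2 * (1 + L) * exp 1 * kappa ^ \<alpha> / W \<le> 13 * kappa ^ \<alpha> * L * ln L / W"
    proof -
      have e1: "exp (1::real) \<le> 2.72" using e_less_272 by simp
      have eL: "exp 1 \<le> L" using e1 L3 by simp
      have "ln (exp 1) \<le> ln L" using eL L3 by (subst ln_le_cancel_iff) auto
      then have lnL: "1 \<le> ln L" by simp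
      have "2 * (1 + L) * exp 1 \<le> 2 * (1 + L) * 2.72" using e1 L3 by (intro mult_left_mono) auto
      also have "\<dots> \<le> 13 * L * 1" using L3 by simp
      also have "\<dots> \<le> 13 * L * ln L" using lnL L3 by (intro mult_left_mono) auto
      finally have h: "2 * (1 + L) * exp 1 * kappa ^ \<alpha> \<le> 13 * L * ln L * kappa ^ \<alpha>" using kpos by (rule mult_right_mono)
      have e: "13 * L * ln L * kappa ^ \<alpha> = 13 * kappa ^ \<alpha> * L * ln L" by (simp only: mult.commute mult.left_commute)
      show ?thesis using divide_right_mono[OF h, of W] W0 unfolding e by simp
    qed
    have F1: "(\<Sum>\<^sub>\<infinity>d\<in>D. 1 / real d) \<le> 3 * kappa ^ \<alpha> * ln Y / Y powr (1 - 1 / real \<alpha>)"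
      using order_trans[OF I1 C1] unfolding W_def L_def .
    have F2: "(\<Sum>\<^sub>\<infinity>d\<in>D. 1 / real (totient d)) \<le> 13 * kappa ^ \<alpha> * ln Y * ln (ln Y) / Y powr (1 - 1 / real \<alpha>)"
      using order_trans[OF I2 C2] unfolding W_def L_def .
    have "(\<lambda>d. 1 / real d) summable_on D \<and>
        (\<Sum>\<^sub>\<infinity>d\<in>D. 1 / real d) \<le> 3 * kappa ^ \<alpha> * ln Y / Y powr (1 - 1 / real \<alpha>) \<and>
        (\<lambda>d. 1 / real (totient d)) summable_on D \<and>
        (\<Sum>\<^sub>\<infinity>d\<in>D. 1 / real (totient d))
          \<le> 13 * kappa ^ \<alpha> * ln Y * ln (ln Y) / Y powr (1 - 1 / real \<alpha>)"
      using S1 S2 F1 F2 by (intro conjI)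
    then show ?thesis unfolding D_def Let_def .
  qed
  show ?thesis
  proof (intro conjI allI impI)
    show "kappa \<le> 5.5" by (rule kappa_le)
  next
    fix Y :: real and \<alpha> :: nat assume h: "Y \<ge> 20 \<and> \<alpha> \<ge> 2"
    show "let D = {d::nat. real d \<ge> Y \<and> alpha_full \<alpha> d} in
        (\<lambda>d. 1 / real d) summable_on D \<and>
        (\<Sum>\<^sub>\<infinity>d\<in>D. 1 / real d) \<le> 3 * kappa ^ \<alpha> * ln Y / Y powr (1 - 1 / real \<alpha>) \<and>
        (\<lambda>d. 1 / real (totient d)) summable_on D \<and>
        (\<Sum>\<^sub>\<infinity>d\<in>D. 1 / real (totient d))
          \<le> 13 * kappa ^ \<alpha> * ln Y * ln (ln Y) / Y powr (1 - 1 / real \<alpha>)"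
      using part2[OF conjunct1[OF h] conjunct2[OF h]] .
  qed
qed

end
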